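(* Let $\rho$ be a density operator and $O$ a Hermitian observable on a finite-dimensional Hilbert space, let $H_1,\dots,H_K$ be Hermitian operators (not necessarily commuting) and $V_1,\dots,V_K$ unitaries. For $\theta\in\mathbb{R}$ define the channel $\mathcal{E}_\theta(X)=\Big(\prod_{k=1}^KV_ke^{-i\theta H_k}\Big)^\dagger X\Big(\prod_{k=1}^KV_ke^{-i\theta H_k}\Big)$ and $\mathcal{L}(\theta)=\operatorname{Tr}[\rho\,\mathcal{E}_\theta(O)]$. Let $\phi\in\mathbb{R}$ and $r>0$ with $r\le\frac{3}{4\sum_{i=1}^K\omega^{(\max)}(H_i)}$. Then $$\operatorname{Var}_{\theta\sim\mathcal{U}(\phi,r)}[\mathcal{L}(\theta)]\ge\frac{r^4}{45}\operatorname{Tr}[\rho\,\mathcal{E}^{(2)}_\phi(O)]^2-\frac{32\big(\sum_{i=1}^K\omega^{(\max)}(H_i)\big)^6\|O\|_\infty^2}{135}r^6,$$ where $\mathcal{E}^{(2)}_\phi(O)=\frac{d^2}{d\theta^2}\mathcal{E}_\theta(O)\big|_{\theta=\phi}$.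
   Context: $\omega^{(\max)}(H)=\lambda_{\max}(H)-\lambda_{\min}(H)$. $\|\cdot\|_\infty$ is the operator norm. The product $\prod_{k=1}^K$ is ordered with $k=1$ leftmost. $\mathcal{U}(\phi,r)$ is the uniform distribution on $[\phi-r,\phi+r]$. *)

theory Defs
  imports "HOL-Analysis.Analysis"
begin

type_synonym 'n cmat = "complex^'n^'n"

definition mat_adj :: "'n::finite cmat \<Rightarrow> 'n cmat" where
  "mat_adj A = (\<chi> i j. cnj (A $ j $ i))"

definition cscale_mat :: "complex \<Rightarrow> 'n::finite cmat \<Rightarrow> 'n cmat" where
  "cscale_mat c A = (\<chi> i j. c * A $ i $ j)"

definition hermitian :: "'n::finite cmat \<Rightarrow> bool" where
  "hermitian A \<longleftrightarrow> mat_adj A = A"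

definition unitary :: "'n::finite cmat \<Rightarrow> bool" where
  "unitary U \<longleftrightarrow> mat_adj U ** U = mat 1 \<and> U ** mat_adj U = mat 1"

definition cinner :: "complex^'n::finite \<Rightarrow> complex^'n \<Rightarrow> complex" where
  "cinner v w = (\<Sum>i\<in>UNIV. cnj (v $ i) * w $ i)"

definition density_operator :: "'n::finite cmat \<Rightarrow> bool" where
  "density_operator \<rho> \<longleftrightarrow> hermitian \<rho> \<and>
     (\<forall>v. Im (cinner v (\<rho> *v v)) = 0 \<and> 0 \<le> Re (cinner v (\<rho> *v v))) \<and>
     trace \<rho> = 1"

fun matpow :: "'n::finite cmat \<Rightarrow> nat \<Rightarrow> 'n cmat" where
  "matpow A 0 = mat 1"
| "matpow A (Suc k) = A ** matpow A k"

definition mexp :: "'n::finite cmat \<Rightarrow> 'n cmat" where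
  "mexp A = (\<Sum>k. (1 / fact k) *\<^sub>R matpow A k)"

definition eigvals :: "'n::finite cmat \<Rightarrow> complex set" where
  "eigvals A = {c. \<exists>v. v \<noteq> 0 \<and> A *v v = c *s v}"

text \<open>omega_max(H) = lambda_max(H) - lambda_min(H) (eigenvalues of a Hermitian H are real)\<close>
definition omega_max :: "'n::finite cmat \<Rightarrow> real" where
  "omega_max H = Max (Re ` eigvals H) - Min (Re ` eigvals H)"

definition op_norm :: "'n::finite cmat \<Rightarrow> real" where
  "op_norm A = onorm (\<lambda>v. A *v v)"

text \<open>ordered product prod_{k=1}^K V_k exp(-i theta H_k), with k = 1 leftmost\<close>
definition circ_unitary :: "nat \<Rightarrow> (nat \<Rightarrow> 'n::finite cmat) \<Rightarrow> (nat \<Rightarrow> 'n cmat) \<Rightarrow> real \<Rightarrow> 'n cmat" where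
  "circ_unitary K V H \<theta> =
     foldr (\<lambda>k A. (V k ** mexp (cscale_mat (- \<i> * complex_of_real \<theta>) (H k))) ** A) [1..<K+1] (mat 1)"

definition chan :: "nat \<Rightarrow> (nat \<Rightarrow> 'n::finite cmat) \<Rightarrow> (nat \<Rightarrow> 'n cmat) \<Rightarrow> real \<Rightarrow> 'n cmat \<Rightarrow> 'n cmat" where
  "chan K V H \<theta> X = mat_adj (circ_unitary K V H \<theta>) ** X ** circ_unitary K V H \<theta>"

text \<open>L(theta) = Tr[rho E_theta(O)] (real for Hermitian rho, O; we take the real part)\<close>
definition loss :: "'n::finite cmat \<Rightarrow> 'n cmat \<Rightarrow> nat \<Rightarrow> (nat \<Rightarrow> 'n cmat) \<Rightarrow> (nat \<Rightarrow> 'n cmat) \<Rightarrow> real \<Rightarrow> real" where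
  "loss \<rho> Ob K V H \<theta> = Re (trace (\<rho> ** chan K V H \<theta> Ob))"

definition chan2 :: "nat \<Rightarrow> (nat \<Rightarrow> 'n::finite cmat) \<Rightarrow> (nat \<Rightarrow> 'n cmat) \<Rightarrow> real \<Rightarrow> 'n cmat \<Rightarrow> 'n cmat" where
  "chan2 K V H \<phi> X =
     vector_derivative (\<lambda>t. vector_derivative (\<lambda>s. chan K V H s X) (at t)) (at \<phi>)"

definition unif_var :: "real \<Rightarrow> real \<Rightarrow> (real \<Rightarrow> real) \<Rightarrow> real" where
  "unif_var \<phi> r f =
     (let M = uniform_measure lborel {\<phi> - r .. \<phi> + r}
      in integral\<^sup>L M (\<lambda>\<theta>. (f \<theta> - integral\<^sup>L M f)\<^sup>2))"

end

theory Submission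
  imports Defs
begin

lemma cplx_scaleR[simp]: "c *\<^sub>R (z::complex) = of_real c * z"
  by (simp add: scaleR_conv_of_real)

lemma mat_adj_nth[simp]: "mat_adj A $ i $ j = cnj (A $ j $ i)"
  by (simp add: mat_adj_def)

lemma cscale_nth[simp]: "cscale_mat c A $ i $ j = c * A $ i $ j"
  by (simp add: cscale_mat_def)

lemma mat_adj_adj[simp]: "mat_adj (mat_adj A) = A"
  by (simp add: vec_eq_iff)

lemma mat_adj_mult: "mat_adj (A ** B) = mat_adj B ** mat_adj (A :: 'n::finite cmat)"
  by (simp add: vec_eq_iff matrix_matrix_mult_def mult.commute)

lemma mat_adj_add: "mat_adj (A + B) = mat_adj A + mat_adj (B :: 'n::finite cmat)"
  by (simp add: vec_eq_iff)

lemma mat_adj_diff: "mat_adj (A - B) = mat_adj A - mat_adj (B :: 'n::finite cmat)"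
  by (simp add: vec_eq_iff)

lemma mat_adj_scaleR: "mat_adj (c *\<^sub>R A) = c *\<^sub>R mat_adj (A :: 'n::finite cmat)"
  by (simp add: vec_eq_iff)

lemma mat_adj_cscale: "mat_adj (cscale_mat c A) = cscale_mat (cnj c) (mat_adj (A :: 'n::finite cmat))"
  by (simp add: vec_eq_iff)

lemma mat_adj_mat[simp]: "mat_adj (mat 1 :: 'n::finite cmat) = mat 1"
  by (simp add: vec_eq_iff mat_def)

lemma mat_adj_zero[simp]: "mat_adj (0 :: 'n::finite cmat) = 0"
  by (simp add: vec_eq_iff)

lemma mat_adj_sum: "mat_adj (sum f S) = sum (\<lambda>x. mat_adj (f x)) (S::'b set)"
  for f :: "'b \<Rightarrow> 'n::finite cmat"
  by (induct S rule: infinite_finite_induct) (auto simp: mat_adj_add)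

lemma cscale_mult_left: "cscale_mat c A ** B = cscale_mat c (A ** (B :: 'n::finite cmat))"
  by (simp add: vec_eq_iff matrix_matrix_mult_def sum_distrib_left mult.assoc)

lemma cscale_mult_right: "A ** cscale_mat c B = cscale_mat c (A ** (B :: 'n::finite cmat))"
  by (simp add: vec_eq_iff matrix_matrix_mult_def sum_distrib_left mult.assoc mult.left_commute)

lemma cscale_cscale: "cscale_mat c (cscale_mat d A) = cscale_mat (c * d) (A :: 'n::finite cmat)"
  by (simp add: vec_eq_iff mult.assoc)

lemma cscale_add: "cscale_mat c (A + B) = cscale_mat c A + cscale_mat c (B :: 'n::finite cmat)"
  by (simp add: vec_eq_iff algebra_simps)

lemma cscale_diff: "cscale_mat c (A - B) = cscale_mat c A - cscale_mat c (B :: 'n::finite cmat)"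
  by (simp add: vec_eq_iff algebra_simps)

lemma cscale_of_real: "cscale_mat (of_real c) A = c *\<^sub>R (A :: 'n::finite cmat)"
  by (simp add: vec_eq_iff)

lemma cscale_one[simp]: "cscale_mat 1 A = A"
  by (simp add: vec_eq_iff)

lemma scaleR_mult_left: "(c *\<^sub>R A) ** B = c *\<^sub>R (A ** (B :: 'n::finite cmat))"
  by (simp add: vec_eq_iff matrix_matrix_mult_def sum_distrib_left mult.assoc)

lemma scaleR_mult_right: "A ** (c *\<^sub>R B) = c *\<^sub>R (A ** (B :: 'n::finite cmat))"
  by (simp add: vec_eq_iff matrix_matrix_mult_def sum_distrib_left mult.left_commute)

lemma mult_add_left: "(A + B) ** C = A ** C + B ** (C :: 'n::finite cmat)"
  by (simp add: vec_eq_iff matrix_matrix_mult_def sum.distrib algebra_simps)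

lemma mult_add_right: "C ** (A + B) = C ** A + C ** (B :: 'n::finite cmat)"
  by (simp add: matrix_add_ldistrib)

lemma mult_diff_left: "(A - B) ** C = A ** C - B ** (C :: 'n::finite cmat)"
  by (simp add: vec_eq_iff matrix_matrix_mult_def sum_subtractf algebra_simps)

lemma mult_diff_right: "C ** (A - B) = C ** A - C ** (B :: 'n::finite cmat)"
  by (simp add: vec_eq_iff matrix_matrix_mult_def sum_subtractf algebra_simps)

lemma mult_zero_left[simp]: "(0::'n::finite cmat) ** A = 0"
  by (simp add: vec_eq_iff matrix_matrix_mult_def)

lemma mult_zero_right[simp]: "A ** (0::'n::finite cmat) = 0"
  by (simp add: vec_eq_iff matrix_matrix_mult_def)

lemma mult_sum_left: "sum f S ** (C :: 'n::finite cmat) = sum (\<lambda>x. f x ** C) S"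
  by (induct S rule: infinite_finite_induct) (auto simp: mult_add_left)

lemma mult_sum_right: "C ** sum f S = sum (\<lambda>x. C ** f x) S" for C :: "'n::finite cmat" and f :: "'b \<Rightarrow> 'n cmat"
  by (induct S rule: infinite_finite_induct) (auto simp: mult_add_right)

lemma cinner_add_right: "cinner v (w + u) = cinner v w + cinner v u"
  by (simp add: cinner_def sum.distrib algebra_simps)
lemma cinner_add_left: "cinner (v + w) u = cinner v u + cinner w u"
  by (simp add: cinner_def sum.distrib algebra_simps)
lemma cinner_diff_right: "cinner v (w - u) = cinner v w - cinner v u"
  by (simp add: cinner_def sum_subtractf algebra_simps)
lemma cinner_diff_left: "cinner (v - w) u = cinner v u - cinner w u"
  by (simp add: cinner_def sum_subtractf algebra_simps)
lemma cinner_scale_right: "cinner v (c *s w) = c * cinner v w"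
  by (simp add: cinner_def sum_distrib_left algebra_simps)
lemma cinner_scale_left: "cinner (c *s v) w = cnj c * cinner v w"
  by (simp add: cinner_def sum_distrib_left algebra_simps)
lemma cinner_scaleR_right: "cinner v (c *\<^sub>R w) = of_real c * cinner v w"
  by (simp add: cinner_def sum_distrib_left  algebra_simps)
lemma cinner_scaleR_left: "cinner (c *\<^sub>R v) w = of_real c * cinner v w"
  by (simp add: cinner_def sum_distrib_left  algebra_simps)
lemma cinner_zero_right[simp]: "cinner v 0 = 0"
  by (simp add: cinner_def)
lemma cinner_zero_left[simp]: "cinner 0 v = 0"
  by (simp add: cinner_def)
lemma cinner_commute: "cinner w v = cnj (cinner v w)"
  by (simp add: cinner_def mult.commute)

lemma cinner_adj: "cinner v (A *v w) = cinner (mat_adj A *v v) w"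
proof -
  have "cinner v (A *v w) = (\<Sum>i\<in>UNIV. \<Sum>j\<in>UNIV. cnj (v $ i) * (A $ i $ j * w $ j))"
    by (simp add: cinner_def matrix_vector_mult_def sum_distrib_left)
  also have "\<dots> = (\<Sum>j\<in>UNIV. \<Sum>i\<in>UNIV. cnj (v $ i) * (A $ i $ j * w $ j))"
    by (rule sum.swap)
  also have "\<dots> = cinner (mat_adj A *v v) w"
    by (simp add: cinner_def matrix_vector_mult_def sum_distrib_right sum_distrib_left algebra_simps)
  finally show ?thesis .
qed

lemma norm_vec_sq: "(norm v)\<^sup>2 = (\<Sum>i\<in>UNIV. (norm (v $ i))\<^sup>2)"
  unfolding norm_vec_def L2_set_def
  by (simp add: sum_nonneg)

lemma cinner_self: "cinner v v = of_real ((norm v)\<^sup>2)"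
proof -
  have "cinner v v = (\<Sum>i\<in>UNIV. of_real ((norm (v $ i))\<^sup>2))"
    unfolding cinner_def by (intro sum.cong refl) (simp add: complex_norm_square mult.commute del: of_real_power)
  thus ?thesis by (simp add: norm_vec_sq)
qed

lemma Re_cinner_inner: "Re (cinner v w) = inner v w"
  by (simp add: cinner_def inner_vec_def Re_sum inner_complex_def algebra_simps)

lemma norm_cscale_vec: "norm (c *s v) = norm c * norm (v :: complex^'n::finite)"
proof -
  have "(norm (c *s v))\<^sup>2 = ((norm c) * norm v)\<^sup>2"
    by (simp add: norm_vec_sq power_mult_distrib norm_mult sum_distrib_left)
  thus ?thesis by (simp add: power2_eq_iff_nonneg)
qed

lemma cauchy_schwarz_c: "norm (cinner v w) \<le> norm v * norm w"
proof -
  define z where "z = cinner v w"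
  define u where "u = cnj (sgn z)"
  have "norm z = Re (u * z)"
    unfolding u_def
    by (cases "z = 0") (simp_all add: complex_sgn_def divide_simps, metis cmod_power2 power2_eq_square)
  also have "u * z = cinner v (u *s w)"
    by (simp add: z_def cinner_scale_right)
  also have "Re \<dots> = inner v (u *s w)" by (rule Re_cinner_inner)
  also have "\<dots> \<le> norm v * norm (u *s w)" by (rule norm_cauchy_schwarz)
  also have "norm (u *s w) \<le> norm w"
    by (simp add: norm_cscale_vec u_def norm_sgn)
  hence "norm v * norm (u *s w) \<le> norm v * norm w" by (simp add: mult_left_mono)
  finally show ?thesis by (simp add: z_def)
qed

lemma mv_add: "(A::'n::finite cmat) *v (x + y) = A *v x + A *v y"
  by (simp add: matrix_vector_right_distrib)

lemma mv_scaleR: "(A::'n::finite cmat) *v (c *\<^sub>R x) = c *\<^sub>R (A *v x)"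
  by (simp add: vec_eq_iff matrix_vector_mult_def sum_distrib_left algebra_simps)

lemma mv_cscale: "(cscale_mat c A::'n::finite cmat) *v x = c *s (A *v x)"
  by (simp add: vec_eq_iff matrix_vector_mult_def sum_distrib_left algebra_simps)

lemma bl_mv: "bounded_linear (\<lambda>v. (A::'n::finite cmat) *v v)"
  by (rule linear_conv_bounded_linear[THEN iffD1], rule linearI, rule mv_add, rule mv_scaleR)

lemma op_norm_mv: "norm ((A::'n::finite cmat) *v v) \<le> op_norm A * norm v"
  unfolding op_norm_def by (rule onorm[OF bl_mv])

lemma op_norm_le: "(\<And>v. norm ((A::'n::finite cmat) *v v) \<le> b * norm v) \<Longrightarrow> op_norm A \<le> b"
  unfolding op_norm_def by (rule onorm_le)

lemma op_norm_nonneg: "0 \<le> op_norm (A::'n::finite cmat)"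
  unfolding op_norm_def by (rule onorm_pos_le[OF bl_mv])

lemma op_norm_mult: "op_norm ((A::'n::finite cmat) ** B) \<le> op_norm A * op_norm B"
proof (rule op_norm_le)
  fix v
  have "norm ((A ** B) *v v) = norm (A *v (B *v v))" by (simp add: matrix_vector_mul_assoc)
  also have "\<dots> \<le> op_norm A * norm (B *v v)" by (rule op_norm_mv)
  also have "\<dots> \<le> op_norm A * (op_norm B * norm v)"
    by (rule mult_left_mono[OF op_norm_mv op_norm_nonneg])
  finally show "norm ((A ** B) *v v) \<le> op_norm A * op_norm B * norm v" by (simp add: mult.assoc)
qed

lemma op_norm_add: "op_norm ((A::'n::finite cmat) + B) \<le> op_norm A + op_norm B"
proof (rule op_norm_le)
  fix v
  have "norm ((A + B) *v v) = norm (A *v v + B *v v)" by (simp add: matrix_vector_mult_add_rdistrib)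
  also have "\<dots> \<le> norm (A *v v) + norm (B *v v)" by (rule norm_triangle_ineq)
  also have "\<dots> \<le> op_norm A * norm v + op_norm B * norm v" by (intro add_mono op_norm_mv)
  finally show "norm ((A + B) *v v) \<le> (op_norm A + op_norm B) * norm v" by (simp add: algebra_simps)
qed

lemma op_norm_diff: "op_norm ((A::'n::finite cmat) - B) \<le> op_norm A + op_norm B"
proof (rule op_norm_le)
  fix v
  have "norm ((A - B) *v v) = norm (A *v v - B *v v)" by (simp add: matrix_vector_mult_diff_rdistrib)
  also have "\<dots> \<le> norm (A *v v) + norm (B *v v)" by (rule norm_triangle_ineq4)
  also have "\<dots> \<le> op_norm A * norm v + op_norm B * norm v" by (intro add_mono op_norm_mv)
  finally show "norm ((A - B) *v v) \<le> (op_norm A + op_norm B) * norm v" by (simp add: algebra_simps)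
qed

lemma op_norm_cscale: "op_norm (cscale_mat c (A::'n::finite cmat)) \<le> norm c * op_norm A"
proof (rule op_norm_le)
  fix v
  have "norm (cscale_mat c A *v v) = norm c * norm (A *v v)" by (simp add: mv_cscale norm_cscale_vec)
  also have "\<dots> \<le> norm c * (op_norm A * norm v)" by (rule mult_left_mono[OF op_norm_mv]) simp
  finally show "norm (cscale_mat c A *v v) \<le> norm c * op_norm A * norm v" by (simp add: mult.assoc)
qed

lemma op_norm_scaleR: "op_norm (c *\<^sub>R (A::'n::finite cmat)) \<le> \<bar>c\<bar> * op_norm A"
  using op_norm_cscale[of "of_real c" A] by (simp add: cscale_of_real)

lemma op_norm_zero[simp]: "op_norm (0::'n::finite cmat) = 0"
proof -
  have "op_norm (0::'n::finite cmat) \<le> 0" by (rule op_norm_le) simp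
  thus ?thesis using op_norm_nonneg[of "0::'n cmat"] by linarith
qed

lemma unitary_adj: "unitary U \<Longrightarrow> unitary (mat_adj U)"
  by (simp add: unitary_def)

lemma unitary_mult: "unitary U \<Longrightarrow> unitary V \<Longrightarrow> unitary (U ** (V::'n::finite cmat))"
proof -
  assume u: "unitary U" and v: "unitary V"
  have "mat_adj (U ** V) ** (U ** V) = mat_adj V ** (mat_adj U ** U) ** V"
    by (simp add: mat_adj_mult matrix_mul_assoc)
  also have "\<dots> = mat 1" using u v by (simp add: unitary_def)
  finally have 1: "mat_adj (U ** V) ** (U ** V) = mat 1" .
  have "(U ** V) ** mat_adj (U ** V) = U ** (V ** mat_adj V) ** mat_adj U"
    by (simp add: mat_adj_mult matrix_mul_assoc)
  also have "\<dots> = mat 1" using u v by (simp add: unitary_def)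
  finally show ?thesis using 1 by (simp add: unitary_def)
qed

lemma unitary_one: "unitary (mat 1 :: 'n::finite cmat)"
  by (simp add: unitary_def)

lemma unitary_norm: "unitary U \<Longrightarrow> norm ((U::'n::finite cmat) *v v) = norm v"
proof -
  assume u: "unitary U"
  have "of_real ((norm (U *v v))\<^sup>2) = cinner (U *v v) (U *v v)" by (simp add: cinner_self)
  also have "\<dots> = cinner (mat_adj U *v (U *v v)) v" by (simp add: cinner_adj)
  also have "\<dots> = cinner v v" using u by (simp add: matrix_vector_mul_assoc unitary_def)
  also have "\<dots> = of_real ((norm v)\<^sup>2)" by (simp add: cinner_self)
  finally have "(norm (U *v v))\<^sup>2 = (norm v)\<^sup>2" by (simp only: of_real_eq_iff)
  thus ?thesis by (simp add: power2_eq_iff_nonneg)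
qed

lemma op_norm_conj: "unitary U \<Longrightarrow> op_norm (mat_adj U ** X ** (U::'n::finite cmat)) \<le> op_norm X"
proof (rule op_norm_le)
  fix v assume u: "unitary U"
  have "norm ((mat_adj U ** X ** U) *v v) = norm (mat_adj U *v (X *v (U *v v)))"
    by (simp add: matrix_vector_mul_assoc matrix_mul_assoc)
  also have "\<dots> = norm (X *v (U *v v))" using unitary_norm[OF unitary_adj[OF u]] by simp
  also have "\<dots> \<le> op_norm X * norm (U *v v)" by (rule op_norm_mv)
  also have "\<dots> = op_norm X * norm v" using unitary_norm[OF u] by simp
  finally show "norm ((mat_adj U ** X ** U) *v v) \<le> op_norm X * norm v" .
qed

lemma op_norm_conj': "unitary U \<Longrightarrow> op_norm (U ** X ** mat_adj (U::'n::finite cmat)) \<le> op_norm X"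
  using op_norm_conj[OF unitary_adj, of U X] by simp

definition diagm :: "('n::finite \<Rightarrow> complex) \<Rightarrow> 'n cmat" where
  "diagm d = (\<chi> i j. if i = j then d i else 0)"

lemma diagm_nth[simp]: "diagm d $ i $ j = (if i = j then d i else 0)"
  by (simp add: diagm_def)

lemma sum_delta_l: "(\<Sum>k\<in>(UNIV::'n::finite set). (if i = k then c else 0) * f k) = (c::complex) * f i"
proof -
  have "(\<Sum>k\<in>(UNIV::'n set). (if i = k then c else 0) * f k) = (\<Sum>k\<in>UNIV. if k = i then c * f k else 0)"
    by (rule sum.cong) auto
  thus ?thesis by simp
qed

lemma sum_delta_r: "(\<Sum>k\<in>(UNIV::'n::finite set). f k * (if k = j then c else 0)) = f j * (c::complex)"
proof -
  have "(\<Sum>k\<in>(UNIV::'n set). f k * (if k = j then c else 0)) = (\<Sum>k\<in>UNIV. if k = j then f k * c else 0)"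
    by (rule sum.cong) auto
  thus ?thesis by simp
qed

lemma diagm_mult_left: "(diagm d ** X) $ i $ j = d i * X $ i $ j"
proof -
  have "(diagm d ** X) $ i $ j = (\<Sum>k\<in>UNIV. (if i = k then d i else 0) * X $ k $ j)"
    by (auto simp: matrix_matrix_mult_def intro!: sum.cong)
  thus ?thesis by (simp add: sum_delta_l)
qed

lemma diagm_mult_right: "(X ** diagm d) $ i $ j = X $ i $ j * d j"
proof -
  have "(X ** diagm d) $ i $ j = (\<Sum>k\<in>UNIV. X $ i $ k * (if k = j then d j else 0))"
    by (auto simp: matrix_matrix_mult_def intro!: sum.cong)
  thus ?thesis by (simp add: sum_delta_r)
qed

lemma diagm_mult: "diagm d ** diagm e = diagm (\<lambda>i. d i * e i)"
  by (simp add: vec_eq_iff diagm_mult_left)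

lemma diagm_adj: "mat_adj (diagm d) = diagm (\<lambda>i. cnj (d i))"
  by (simp add: vec_eq_iff)

lemma diagm_one: "diagm (\<lambda>i. 1) = mat 1"
  by (simp add: vec_eq_iff mat_def)

lemma diagm_mv: "diagm d *v v = (\<chi> i. d i * v $ i)"
proof -
  have "(diagm d *v v) $ i = (\<Sum>k\<in>UNIV. (if i = k then d i else 0) * v $ k)" for i
    by (auto simp: matrix_vector_mult_def intro!: sum.cong)
  hence "(diagm d *v v) $ i = d i * v $ i" for i by (simp add: sum_delta_l)
  thus ?thesis by (simp add: vec_eq_iff)
qed

lemma op_norm_diagm: "(\<And>i. norm (d i) \<le> b) \<Longrightarrow> op_norm (diagm d) \<le> b"
proof (rule op_norm_le)
  fix v assume b: "\<And>i. norm (d i) \<le> b"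
  have b0: "0 \<le> b" using b[of undefined] norm_ge_zero order_trans by blast
  have "(norm (diagm d *v v))\<^sup>2 = (\<Sum>i\<in>UNIV. (norm (d i * v $ i))\<^sup>2)"
    by (simp add: norm_vec_sq diagm_mv)
  also have "\<dots> \<le> (\<Sum>i\<in>UNIV. b\<^sup>2 * (norm (v $ i))\<^sup>2)"
    by (intro sum_mono) (simp add: norm_mult power_mult_distrib b mult_right_mono power_mono)
  also have "\<dots> = (b * norm v)\<^sup>2" by (simp add: norm_vec_sq sum_distrib_left power_mult_distrib)
  finally show "norm (diagm d *v v) \<le> b * norm v"
    using b0 by (simp add: power2_le_iff_abs_le)
qed

lemma quad_zero:
  fixes a b :: real
  assumes "\<And>t. 2 * t * a + t\<^sup>2 * b \<le> 0"
  shows "a = 0"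
proof -
  define t where "t = a / (1 + \<bar>b\<bar>)"
  have p: "0 < 1 + \<bar>b\<bar>" by simp
  have e: "t * (1 + \<bar>b\<bar>) = a" using p by (simp add: t_def)
  have "(2 * t * a + t\<^sup>2 * b) * (1 + \<bar>b\<bar>)\<^sup>2
      = 2 * a * (t * (1 + \<bar>b\<bar>)) * (1 + \<bar>b\<bar>) + (t * (1 + \<bar>b\<bar>))\<^sup>2 * b"
    by (simp add: power2_eq_square algebra_simps)
  also have "\<dots> = 2 * a * a * (1 + \<bar>b\<bar>) + a\<^sup>2 * b" by (simp only: e)
  also have "\<dots> = a\<^sup>2 * (2 * (1 + \<bar>b\<bar>) + b)" by (simp add: power2_eq_square algebra_simps)
  finally have id: "(2 * t * a + t\<^sup>2 * b) * (1 + \<bar>b\<bar>)\<^sup>2 = a\<^sup>2 * (2 * (1 + \<bar>b\<bar>) + b)" .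
  have "2 * t * a + t\<^sup>2 * b \<le> 0" by (rule assms)
  hence "(2 * t * a + t\<^sup>2 * b) * (1 + \<bar>b\<bar>)\<^sup>2 \<le> 0"
    by (simp add: mult_nonpos_nonneg)
  hence "a\<^sup>2 * (2 * (1 + \<bar>b\<bar>) + b) \<le> 0" by (simp only: id)
  moreover have "0 < 2 * (1 + \<bar>b\<bar>) + b" by (cases "b \<ge> 0") auto
  ultimately have "a\<^sup>2 \<le> 0" by (simp add: mult_le_0_iff)
  thus ?thesis by simp
qed

lemma mv_cscale_vec: "(A::'n::finite cmat) *v (c *s x) = c *s (A *v x)"
  by (simp add: vec_eq_iff matrix_vector_mult_def sum_distrib_left algebra_simps)

lemma herm_cinner: "hermitian A \<Longrightarrow> cinner v (A *v w) = cinner (A *v v) w"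
  by (simp add: hermitian_def cinner_adj)

lemma cinner_self_Re: "Re (cinner v v) = (norm v)\<^sup>2"
  by (simp add: cinner_self)

lemma cinner_self_zero: "cinner v v = 0 \<longleftrightarrow> v = 0"
  by (simp add: cinner_self)

lemma bl_cinner: "bounded_linear (cinner s)"
  by (rule linear_conv_bounded_linear[THEN iffD1], rule linearI,
      rule cinner_add_right, simp add: cinner_scaleR_right)

lemma bbl_cinner: "bounded_bilinear cinner"
  by (rule bilinear_conv_bounded_bilinear[THEN iffD1])
     (auto simp: bilinear_def intro!: linearI simp: cinner_add_right cinner_add_left
        cinner_scaleR_right cinner_scaleR_left)

lemma cont_quad: "continuous_on X (\<lambda>v. Re (cinner v ((A::'n::finite cmat) *v v)))"
proof -
  have "continuous_on X (\<lambda>v. cinner v (A *v v))"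
    by (intro bounded_bilinear.continuous_on[OF bbl_cinner] continuous_on_id
        linear_continuous_on bl_mv)
  thus ?thesis by (intro continuous_intros)
qed

lemma eig_step:
  fixes A :: "'n::finite cmat" and S :: "(complex^'n) set"
  assumes herm: "hermitian A" and fin: "finite S" and card: "card S < CARD('n)"
    and eig: "\<And>s. s \<in> S \<Longrightarrow> \<exists>c. A *v s = c *s s"
  shows "\<exists>v \<mu>. norm v = 1 \<and> (\<forall>s\<in>S. cinner s v = 0) \<and> A *v v = of_real \<mu> *s v"
proof -
  define W where "W = {v. \<forall>s\<in>S. cinner s v = 0}"
  have W_add: "v + w \<in> W" if "v \<in> W" "w \<in> W" for v w
    using that by (simp add: W_def cinner_add_right)
  have W_scaleR: "t *\<^sub>R v \<in> W" if "v \<in> W" for v t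
    using that by (simp add: W_def cinner_scaleR_right)
  have W_cscale: "c *s v \<in> W" if "v \<in> W" for v c
    using that by (simp add: W_def cinner_scale_right)
  have W_inv: "A *v v \<in> W" if "v \<in> W" for v
  proof -
    { fix s assume s: "s \<in> S"
      then obtain c where c: "A *v s = c *s s" using eig by blast
      have "cinner s (A *v v) = cinner (A *v s) v" by (rule herm_cinner[OF herm])
      also have "\<dots> = 0" using c s that by (simp add: cinner_scale_left W_def)
      finally have "cinner s (A *v v) = 0" . }
    thus ?thesis by (simp add: W_def)
  qed
  define T where "T = S \<union> (\<lambda>s. \<i> *s s) ` S"
  have "finite T" using fin by (simp add: T_def)
  have "dim T \<le> card T" by (rule dim_le_card') fact
  also have "card T \<le> card S + card S" unfolding T_def
    by (rule order_trans[OF card_Un_le]) (simp add: card_image_le fin)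
  also have "\<dots> < DIM(complex^'n)" using card by simp
  finally obtain x :: "complex^'n" where x0: "x \<noteq> 0" and xo: "\<And>y. y \<in> span T \<Longrightarrow> orthogonal x y"
    using orthogonal_to_subspace_exists by blast
  have xW: "x \<in> W"
  proof -
    { fix s assume s: "s \<in> S"
      have "orthogonal x s" using s by (intro xo span_base) (simp add: T_def)
      hence 1: "Re (cinner s x) = 0" by (simp add: orthogonal_def Re_cinner_inner inner_commute)
      have "orthogonal x (\<i> *s s)" using s by (intro xo span_base) (simp add: T_def)
      hence "Re (cinner (\<i> *s s) x) = 0" by (simp add: orthogonal_def Re_cinner_inner inner_commute)
      hence 2: "Im (cinner s x) = 0" by (simp add: cinner_scale_left)
      from 1 2 have "cinner s x = 0" by (simp add: complex_eq_iff) }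
    thus ?thesis by (simp add: W_def)
  qed
  \<comment> \<open>maximize the quadratic form on the unit sphere of W\<close>
  define K where "K = W \<inter> sphere 0 1"
  have "closed W"
  proof -
    have "W = (\<Inter>s\<in>S. {v. cinner s v = 0})" by (auto simp: W_def)
    moreover have "closed {v. cinner s v = 0}" for s
      by (intro closed_Collect_eq linear_continuous_on bl_cinner continuous_on_const)
    ultimately show ?thesis by auto
  qed
  hence cK: "compact K" unfolding K_def by (intro closed_Int_compact compact_sphere)
  define x1 where "x1 = (1 / norm x) *\<^sub>R x"
  have "x1 \<in> K" using x0 xW W_scaleR by (auto simp: K_def x1_def)
  hence "K \<noteq> {}" by auto
  define f where "f = (\<lambda>v. Re (cinner v (A *v v)))"
  obtain v0 where v0K: "v0 \<in> K" and vmax: "\<And>y. y \<in> K \<Longrightarrow> f y \<le> f v0"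
    using continuous_attains_sup[OF cK \<open>K \<noteq> {}\<close>, of f] cont_quad unfolding f_def by blast
  define M where "M = f v0"
  have v0W: "v0 \<in> W" and nv0: "norm v0 = 1" using v0K by (auto simp: K_def)
  have fbound: "f u \<le> M * (norm u)\<^sup>2" if "u \<in> W" for u
  proof (cases "u = 0")
    case True thus ?thesis by (simp add: f_def)
  next
    case False
    define u1 where "u1 = (1 / norm u) *\<^sub>R u"
    have "u1 \<in> K" using False that W_scaleR by (auto simp: K_def u1_def)
    hence "f u1 \<le> M" using vmax M_def by auto
    moreover have "f u1 = f u / (norm u)\<^sup>2"
      by (simp add: f_def u1_def mv_scaleR cinner_scaleR_left cinner_scaleR_right power2_eq_square)
    ultimately show ?thesis using False by (simp add: field_simps)
  qed
  define w where "w = A *v v0 - of_real M *s v0"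
  have wW: "w \<in> W" unfolding w_def using W_inv[OF v0W] W_cscale[OF v0W] W_add W_scaleR
    by (metis diff_conv_add_uminus scaleR_minus1_left)
  have Rsym: "Re (cinner v0 (A *v w)) = Re (cinner w (A *v v0))"
    by (simp add: herm_cinner[OF herm] cinner_commute[of "A *v v0" w])
  have Rsym2: "Re (cinner v0 w) = Re (cinner w v0)"
    by (simp add: cinner_commute[of v0 w])
  have "\<And>t. 2 * t * Re (cinner w w) + t\<^sup>2 * (f w - M * (norm w)\<^sup>2) \<le> 0"
  proof -
    fix t :: real
    have "v0 + t *\<^sub>R w \<in> W" using v0W wW W_add W_scaleR by blast
    hence h0: "f (v0 + t *\<^sub>R w) \<le> M * (norm (v0 + t *\<^sub>R w))\<^sup>2" by (rule fbound)
    have e1: "f (v0 + t *\<^sub>R w) = M + 2 * t * Re (cinner w (A *v v0)) + t\<^sup>2 * f w"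
      using Rsym
      by (simp add: f_def M_def mv_add mv_scaleR cinner_add_left cinner_add_right
          cinner_scaleR_left cinner_scaleR_right power2_eq_square algebra_simps)
    have e2: "(norm (v0 + t *\<^sub>R w))\<^sup>2 = 1 + 2 * t * Re (cinner w v0) + t\<^sup>2 * (norm w)\<^sup>2"
    proof -
      have "(norm (v0 + t *\<^sub>R w))\<^sup>2 = Re (cinner (v0 + t *\<^sub>R w) (v0 + t *\<^sub>R w))"
        by (simp only: cinner_self_Re)
      also have "\<dots> = Re (cinner v0 v0) + 2 * t * Re (cinner w v0) + t\<^sup>2 * Re (cinner w w)"
        using Rsym2 by (simp add: cinner_add_left cinner_add_right
          cinner_scaleR_left cinner_scaleR_right power2_eq_square algebra_simps)
      finally show ?thesis using nv0 by (simp only: cinner_self_Re) simp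
    qed
    have e3: "Re (cinner w w) = Re (cinner w (A *v v0)) - M * Re (cinner w v0)"
      by (simp add: w_def cinner_diff_right cinner_scale_right)
    have h1: "M + 2 * t * Re (cinner w (A *v v0)) + t\<^sup>2 * f w
        \<le> M * (1 + 2 * t * Re (cinner w v0) + t\<^sup>2 * (norm w)\<^sup>2)"
      using h0 unfolding e1 e2 .
    have h2: "M * (1 + 2 * t * Re (cinner w v0) + t\<^sup>2 * (norm w)\<^sup>2)
        = M + 2 * t * (M * Re (cinner w v0)) + t\<^sup>2 * (M * (norm w)\<^sup>2)"
      by (simp add: algebra_simps)
    have h3: "2 * t * Re (cinner w w) = 2 * t * Re (cinner w (A *v v0)) - 2 * t * (M * Re (cinner w v0))"
      unfolding e3 by (simp add: algebra_simps)
    have h4: "t\<^sup>2 * (f w - M * (norm w)\<^sup>2) = t\<^sup>2 * f w - t\<^sup>2 * (M * (norm w)\<^sup>2)"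
      by (simp add: algebra_simps)
    show "2 * t * Re (cinner w w) + t\<^sup>2 * (f w - M * (norm w)\<^sup>2) \<le> 0"
      unfolding h3 h4 using h1 unfolding h2 by linarith
  qed
  hence "Re (cinner w w) = 0" by (rule quad_zero)
  hence "w = 0" by (simp add: cinner_self_Re)
  hence "A *v v0 = of_real M *s v0" by (simp add: w_def)
  moreover have "\<forall>s\<in>S. cinner s v0 = 0" using v0W by (simp add: W_def)
  ultimately show ?thesis using nv0 by blast
qed

lemma eig_family:
  fixes A :: "'n::finite cmat"
  assumes herm: "hermitian A"
  shows "k \<le> CARD('n) \<Longrightarrow> \<exists>f lam. (\<forall>i<k. norm (f i) = 1 \<and> A *v f i = of_real (lam i) *s f i) \<and>
            (\<forall>i<k. \<forall>j<k. i \<noteq> j \<longrightarrow> cinner (f i) (f j) = 0)"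
proof (induction k)
  case 0 thus ?case by auto
next
  case (Suc k)
  then obtain f lam where f1: "\<forall>i<k. norm (f i) = 1 \<and> A *v f i = of_real (lam i) *s f i"
    and f2: "\<forall>i<k. \<forall>j<k. i \<noteq> j \<longrightarrow> cinner (f i) (f j) = 0" by auto
  have "card (f ` {..<k}) < CARD('n)"
    using Suc.prems card_image_le[of "{..<k}" f] by simp
  moreover have "\<And>s. s \<in> f ` {..<k} \<Longrightarrow> \<exists>c. A *v s = c *s s" using f1 by blast
  ultimately obtain v \<mu> where v: "norm v = 1" "\<forall>s\<in>f ` {..<k}. cinner s v = 0" "A *v v = of_real \<mu> *s v"
    using eig_step[OF herm, of "f ` {..<k}"] by blast
  define f' where "f' = f(k := v)"
  define lam' where "lam' = lam(k := \<mu>)"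
  have "\<forall>i<Suc k. norm (f' i) = 1 \<and> A *v f' i = of_real (lam' i) *s f' i"
    using f1 v by (auto simp: f'_def lam'_def less_Suc_eq)
  moreover have "\<forall>i<Suc k. \<forall>j<Suc k. i \<noteq> j \<longrightarrow> cinner (f' i) (f' j) = 0"
  proof (intro allI impI)
    fix i j assume ij: "i < Suc k" "j < Suc k" "i \<noteq> j"
    show "cinner (f' i) (f' j) = 0"
    proof (cases "i = k")
      case True
      hence "j < k" using ij by auto
      hence "cinner (f j) v = 0" using v(2) by auto
      thus ?thesis using True ij by (simp add: f'_def cinner_commute[of v])
    next
      case False
      hence ik: "i < k" using ij by auto
      show ?thesis
      proof (cases "j = k")
        case True thus ?thesis using ik v(2) by (simp add: f'_def)
      next
        case False thus ?thesis using ik ij f2 \<open>i \<noteq> k\<close> by (simp add: f'_def)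
      qed
    qed
  qed
  ultimately show ?case by blast
qed

theorem spectral:
  fixes A :: "'n::finite cmat"
  assumes herm: "hermitian A"
  shows "\<exists>W lam. unitary W \<and> A = W ** diagm (\<lambda>i. of_real (lam i)) ** mat_adj W"
proof -
  obtain f lam where f1: "\<forall>i<CARD('n). norm (f i) = 1 \<and> A *v f i = of_real (lam i) *s f i"
    and f2: "\<forall>i<CARD('n). \<forall>j<CARD('n). i \<noteq> j \<longrightarrow> cinner (f i) (f j) = 0"
    using eig_family[OF herm, of "CARD('n)"] by auto
  obtain h :: "'n \<Rightarrow> nat" where h: "bij_betw h UNIV {0..<CARD('n)}"
    using ex_bij_betw_finite_nat[of "UNIV :: 'n set"] by auto
  have hlt: "h i < CARD('n)" for i using h by (auto simp: bij_betw_def)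
  have hinj: "h i = h j \<Longrightarrow> i = j" for i j using h by (auto simp: bij_betw_def inj_on_def)
  define W :: "'n cmat" where "W = (\<chi> a b. f (h b) $ a)"
  have "mat_adj W ** W = mat 1"
  proof -
    have "(mat_adj W ** W) $ b $ c = cinner (f (h b)) (f (h c))" for b c
      by (simp add: matrix_matrix_mult_def W_def cinner_def)
    moreover have "cinner (f (h b)) (f (h c)) = (if b = c then 1 else 0)" for b c
    proof (cases "b = c")
      case True thus ?thesis using f1 hlt by (simp add: cinner_self)
    next
      case False thus ?thesis using f2 hlt hinj by metis
    qed
    ultimately show ?thesis by (simp add: vec_eq_iff mat_def)
  qed
  hence u: "unitary W" by (simp add: unitary_def matrix_left_right_inverse)
  have "A ** W = W ** diagm (\<lambda>i. of_real (lam (h i)))"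
  proof -
    have "(A ** W) $ a $ c = (A *v f (h c)) $ a" for a c
      by (simp add: matrix_matrix_mult_def matrix_vector_mult_def W_def)
    also have "(A *v f (h c)) $ a = of_real (lam (h c)) * f (h c) $ a" for a c
      using f1 hlt by simp
    finally show ?thesis by (simp add: vec_eq_iff diagm_mult_right W_def mult.commute)
  qed
  hence "A ** W ** mat_adj W = W ** diagm (\<lambda>i. of_real (lam (h i))) ** mat_adj W" by simp
  moreover have "A ** W ** mat_adj W = A" using u
    by (simp add: unitary_def matrix_mul_assoc[symmetric])
  ultimately show ?thesis using u by metis
qed

lemma axis_norm: "norm (axis j (1::complex) :: complex^'n::finite) = 1"
proof -
  have "(norm (axis j (1::complex) :: complex^'n))\<^sup>2 = (\<Sum>i\<in>UNIV. if i = j then 1 else 0)"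
    unfolding norm_vec_sq by (intro sum.cong) (auto simp: axis_def)
  hence "(norm (axis j (1::complex) :: complex^'n))\<^sup>2 = 1" by simp
  thus ?thesis by (simp add: power2_eq_1_iff)
qed

lemma eigvals_diag:
  fixes A W :: "'n::finite cmat"
  assumes u: "unitary W" and A: "A = W ** diagm (\<lambda>i. of_real (lam i)) ** mat_adj W"
  shows "eigvals A = range (\<lambda>i. of_real (lam i))"
proof
  show "range (\<lambda>i. complex_of_real (lam i)) \<subseteq> eigvals A"
  proof
    fix c assume "c \<in> range (\<lambda>i. complex_of_real (lam i))"
    then obtain j where c: "c = of_real (lam j)" by auto
    define u where "u = W *v axis j 1"
    have "norm u = 1" using unitary_norm[OF u] by (simp add: u_def axis_norm)
    hence "u \<noteq> 0" by auto
    moreover have "A *v u = c *s u"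
    proof -
      have "A *v u = W *v (diagm (\<lambda>i. of_real (lam i)) *v ((mat_adj W ** W) *v axis j 1))"
        by (simp add: A u_def matrix_vector_mul_assoc matrix_mul_assoc)
      also have "mat_adj W ** W = mat 1" using u by (simp add: unitary_def)
      also have "diagm (\<lambda>i. of_real (lam i)) *v (mat 1 *v axis j 1) = c *s axis j 1"
        by (simp add: diagm_mv c vec_eq_iff axis_def)
      finally show ?thesis by (simp add: u_def mv_cscale_vec)
    qed
    ultimately show "c \<in> eigvals A" by (auto simp: eigvals_def)
  qed
next
  show "eigvals A \<subseteq> range (\<lambda>i. complex_of_real (lam i))"
  proof
    fix c assume "c \<in> eigvals A"
    then obtain v where v0: "v \<noteq> 0" and v: "A *v v = c *s v" by (auto simp: eigvals_def)
    define y where "y = mat_adj W *v v"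
    have "norm y = norm v" using unitary_norm[OF unitary_adj[OF u]] by (simp add: y_def)
    hence "y \<noteq> 0" using v0 by auto
    then obtain j where yj: "y $ j \<noteq> 0" by (auto simp: vec_eq_iff)
    have "diagm (\<lambda>i. of_real (lam i)) *v y = mat_adj W *v (A *v v)"
    proof -
      have "mat_adj W *v (A *v v) = (mat_adj W ** W) ** diagm (\<lambda>i. of_real (lam i)) ** mat_adj W *v v"
        by (simp add: A matrix_vector_mul_assoc matrix_mul_assoc)
      also have "mat_adj W ** W = mat 1" using u by (simp add: unitary_def)
      finally show ?thesis by (simp add: y_def matrix_vector_mul_assoc)
    qed
    also have "\<dots> = c *s y" by (simp add: v y_def mv_cscale_vec)
    finally have "(diagm (\<lambda>i. of_real (lam i)) *v y) $ j = (c *s y) $ j" by simp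
    hence "of_real (lam j) * y $ j = c * y $ j" by (simp add: diagm_mv)
    hence "c = of_real (lam j)" using yj by simp
    thus "c \<in> range (\<lambda>i. complex_of_real (lam i))" by auto
  qed
qed

lemma omega_diag:
  fixes A W :: "'n::finite cmat"
  assumes u: "unitary W" and A: "A = W ** diagm (\<lambda>i. of_real (lam i)) ** mat_adj W"
  shows "omega_max A = Max (range lam) - Min (range lam)"
proof -
  have "Re ` eigvals A = range lam" using eigvals_diag[OF u A] by (auto simp: image_image)
  thus ?thesis by (simp add: omega_max_def)
qed

lemma diagm_add: "diagm (\<lambda>i. d i + e i) = diagm d + diagm e"
  by (simp add: vec_eq_iff)

lemma diagm_const: "diagm (\<lambda>i. of_real c) = c *\<^sub>R (mat 1 :: 'n::finite cmat)"
  by (simp add: vec_eq_iff mat_def)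

lemma mat1_mult_scaleR: "(c *\<^sub>R mat 1) ** X = c *\<^sub>R (X::'n::finite cmat)"
  by (simp add: scaleR_mult_left)

lemma mult_mat1_scaleR: "X ** (c *\<^sub>R mat 1) = c *\<^sub>R (X::'n::finite cmat)"
  by (simp add: scaleR_mult_right)

lemma comm_bound:
  fixes H X :: "'n::finite cmat"
  assumes herm: "hermitian H"
  shows "op_norm (H ** X - X ** H) \<le> omega_max H * op_norm X"
proof -
  obtain W lam where u: "unitary W" and H: "H = W ** diagm (\<lambda>i. of_real (lam i)) ** mat_adj W"
    using spectral[OF herm] by blast
  define mx where "mx = Max (range lam)"
  define mn where "mn = Min (range lam)"
  have om: "omega_max H = mx - mn" using omega_diag[OF u H] by (simp add: mx_def mn_def)
  have le1: "lam i \<le> mx" for i by (simp add: mx_def)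
  have le2: "mn \<le> lam i" for i by (simp add: mn_def)
  define c where "c = (mx + mn) / 2"
  define H' where "H' = W ** diagm (\<lambda>i. of_real (lam i - c)) ** mat_adj W"
  have "H = W ** (diagm (\<lambda>i. of_real (lam i - c)) + diagm (\<lambda>i. of_real c)) ** mat_adj W"
    unfolding H diagm_add[symmetric] by simp
  also have "\<dots> = H' + c *\<^sub>R (W ** mat_adj W)"
    unfolding H'_def diagm_const by (simp add: mult_add_left mult_add_right scaleR_mult_right scaleR_mult_left)
  also have "W ** mat_adj W = mat 1" using u by (simp add: unitary_def)
  finally have HH: "H = H' + c *\<^sub>R mat 1" .
  have "H ** X - X ** H = H' ** X - X ** H'"
    unfolding HH by (simp add: mult_add_left mult_add_right mat1_mult_scaleR mult_mat1_scaleR)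
  also have "op_norm (H' ** X - X ** H') \<le> op_norm H' * op_norm X + op_norm X * op_norm H'"
    by (rule order_trans[OF op_norm_diff add_mono[OF op_norm_mult op_norm_mult]])
  also have "op_norm H' \<le> (mx - mn) / 2"
  proof -
    have "op_norm H' \<le> op_norm (diagm (\<lambda>i. complex_of_real (lam i - c)))"
      unfolding H'_def by (rule op_norm_conj'[OF u])
    also have "\<dots> \<le> (mx - mn) / 2"
    proof (rule op_norm_diagm)
      fix i
      show "norm (complex_of_real (lam i - c)) \<le> (mx - mn) / 2"
        using le1[of i] le2[of i] unfolding norm_of_real c_def by (simp add: abs_le_iff field_simps)
    qed
    finally show ?thesis .
  qed
  hence "op_norm H' * op_norm X \<le> (mx - mn) / 2 * op_norm X"
    by (rule mult_right_mono[OF _ op_norm_nonneg])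
  hence "op_norm H' * op_norm X + op_norm X * op_norm H' \<le> (mx - mn) * op_norm X"
    by (simp only: mult.commute[of "op_norm X"])
  finally show ?thesis by (simp add: om)
qed

lemma diag_entry: "(M::'n::finite cmat) $ j $ j = cinner (axis j 1) (M *v axis j 1)"
proof -
  have "cinner (axis j 1) (M *v axis j 1) = (\<Sum>i\<in>UNIV. (if i = j then 1 else 0) * (M $ i $ j))"
    unfolding cinner_def
    by (intro sum.cong refl) (simp add: axis_def matrix_vector_mult_def sum_delta_r[where f="\<lambda>k. M $ _ $ k" and c=1, simplified])
  also have "\<dots> = (\<Sum>i\<in>UNIV. if i = j then M $ i $ j else 0)" by (rule sum.cong) auto
  also have "\<dots> = M $ j $ j" by simp
  finally show ?thesis by simp
qed

lemma conj_entry: "(mat_adj W ** Y ** W) $ j $ j = cinner (W *v axis j 1) (Y *v (W *v axis j 1))"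
  for W Y :: "'n::finite cmat"
proof -
  have "(mat_adj W ** Y ** W) $ j $ j = cinner (axis j 1) (mat_adj W *v (Y *v (W *v axis j 1)))"
    by (simp add: diag_entry matrix_vector_mul_assoc matrix_mul_assoc)
  also have "\<dots> = cinner (W *v axis j 1) (Y *v (W *v axis j 1))"
    by (simp add: cinner_adj)
  finally show ?thesis .
qed

lemma trace_diag_mult: "trace (diagm d ** B) = (\<Sum>j\<in>UNIV. d j * B $ j $ j)"
  by (simp add: trace_def diagm_mult_left)

lemma quad_bound: "norm u = 1 \<Longrightarrow> norm (cinner u (Y *v u)) \<le> op_norm Y"
proof -
  assume n: "norm u = 1"
  have "norm (cinner u (Y *v u)) \<le> norm u * norm (Y *v u)" by (rule cauchy_schwarz_c)
  also have "\<dots> \<le> op_norm Y" using op_norm_mv[of Y u] n by simp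
  finally show ?thesis .
qed

lemma trace_bound:
  fixes \<rho> Y :: "'n::finite cmat"
  assumes d: "density_operator \<rho>"
  shows "norm (trace (\<rho> ** Y)) \<le> op_norm Y"
proof -
  have herm: "hermitian \<rho>" using d by (simp add: density_operator_def)
  obtain W lam where u: "unitary W" and R: "\<rho> = W ** diagm (\<lambda>i. of_real (lam i)) ** mat_adj W"
    using spectral[OF herm] by blast
  define D where "D = diagm (\<lambda>i. complex_of_real (lam i))"
  define uu where "uu j = W *v axis j 1" for j
  have nu: "norm (uu j) = 1" for j using unitary_norm[OF u] by (simp add: uu_def axis_norm)
  have WW: "mat_adj W ** W = mat 1" using u by (simp add: unitary_def)
  have tr: "trace (\<rho> ** Y) = trace (D ** (mat_adj W ** Y ** W))"
  proof -
    have "trace (\<rho> ** Y) = trace (W ** (D ** mat_adj W ** Y))"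
      by (simp add: R D_def matrix_mul_assoc)
    also have "\<dots> = trace ((D ** mat_adj W ** Y) ** W)" by (rule trace_mul_sym)
    finally show ?thesis by (simp add: matrix_mul_assoc)
  qed
  have lamD: "mat_adj W ** \<rho> ** W = D"
  proof -
    have "mat_adj W ** \<rho> ** W = (mat_adj W ** W) ** D ** (mat_adj W ** W)"
      by (simp add: R D_def matrix_mul_assoc)
    thus ?thesis by (simp add: WW)
  qed
  have lam_eq: "of_real (lam j) = cinner (uu j) (\<rho> *v uu j)" for j
  proof -
    have "of_real (lam j) = (mat_adj W ** \<rho> ** W) $ j $ j" by (simp add: lamD D_def)
    thus ?thesis by (simp add: conj_entry uu_def)
  qed
  have lam_nonneg: "0 \<le> lam j" for j
    using d lam_eq[of j] by (simp add: density_operator_def) (metis Re_complex_of_real)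
  have lam_sum: "(\<Sum>j\<in>UNIV. lam j) = 1"
  proof -
    have "trace \<rho> = trace (W ** (D ** mat_adj W))" by (simp add: R D_def matrix_mul_assoc)
    also have "\<dots> = trace ((D ** mat_adj W) ** W)" by (rule trace_mul_sym)
    also have "\<dots> = trace D" by (simp add: WW matrix_mul_assoc[symmetric])
    also have "\<dots> = of_real (\<Sum>j\<in>UNIV. lam j)" by (simp add: trace_def D_def)
    finally have "of_real (\<Sum>j\<in>UNIV. lam j) = (1::complex)" using d by (simp add: density_operator_def)
    thus ?thesis by (simp only: of_real_eq_1_iff)
  qed
  have "trace (\<rho> ** Y) = (\<Sum>j\<in>UNIV. of_real (lam j) * cinner (uu j) (Y *v uu j))"
    unfolding tr D_def trace_diag_mult by (simp add: conj_entry uu_def)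
  hence "norm (trace (\<rho> ** Y)) \<le> (\<Sum>j\<in>UNIV. norm (of_real (lam j) * cinner (uu j) (Y *v uu j)))"
    by (simp add: norm_sum)
  also have "\<dots> \<le> (\<Sum>j\<in>UNIV. lam j * op_norm Y)"
    by (intro sum_mono) (simp add: norm_mult lam_nonneg quad_bound nu mult_left_mono)
  also have "\<dots> = op_norm Y" by (simp add: sum_distrib_right[symmetric] lam_sum)
  finally show ?thesis .
qed

lemma trace_bound_Re:
  "density_operator \<rho> \<Longrightarrow> \<bar>Re (trace (\<rho> ** Y))\<bar> \<le> op_norm Y"
  by (rule order_trans[OF abs_Re_le_cmod trace_bound])

lemma bl_conj: "bounded_linear (\<lambda>X::'n::finite cmat. A ** X ** (B::'n::finite cmat))"
  by (rule linear_conv_bounded_linear[THEN iffD1], rule linearI)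
     (simp_all add: mult_add_left mult_add_right scaleR_mult_left scaleR_mult_right)

lemma bl_cscale_left: "bounded_linear (\<lambda>z. cscale_mat z (M::'n::finite cmat))"
  by (rule linear_conv_bounded_linear[THEN iffD1], rule linearI)
     (simp_all add: vec_eq_iff algebra_simps)

lemma diagm_sum: "diagm (\<lambda>j. \<Sum>k\<in>S. g k j) = (\<Sum>k\<in>S. diagm (g k))"
  by (induct S rule: infinite_finite_induct) (simp_all add: vec_eq_iff)

lemma diagm_basis: "diagm d = (\<Sum>j\<in>UNIV. cscale_mat (d j) (diagm (\<lambda>k. if k = j then 1 else 0)))"
proof -
  have "diagm d = diagm (\<lambda>k. \<Sum>j\<in>UNIV. d j * (if k = j then 1 else 0))"
    by (simp add: if_distrib cong: if_cong)
  also have "\<dots> = (\<Sum>j\<in>UNIV. diagm (\<lambda>k. d j * (if k = j then 1 else 0)))"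
    by (rule diagm_sum)
  also have "\<dots> = (\<Sum>j\<in>UNIV. cscale_mat (d j) (diagm (\<lambda>k. if k = j then 1 else 0)))"
    by (intro sum.cong refl) (simp add: vec_eq_iff)
  finally show ?thesis .
qed

lemma diagm_tendsto:
  assumes "\<And>j. ((\<lambda>n. a n j) \<longlongrightarrow> b j) F"
  shows "((\<lambda>n. diagm (a n)) \<longlongrightarrow> diagm b) F"
  unfolding diagm_def
  by (intro tendsto_vec_lambda) (auto intro: assms)

lemma diagm_sums:
  assumes "\<And>j. (\<lambda>k. g k j) sums s j"
  shows "(\<lambda>k. diagm (g k)) sums diagm s"
proof -
  have "(\<lambda>n. diagm (\<lambda>j. \<Sum>k<n. g k j)) \<longlonglongrightarrow> diagm s"
    by (rule diagm_tendsto) (use assms in \<open>simp add: sums_def\<close>)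
  thus ?thesis by (simp add: sums_def diagm_sum)
qed

lemma matpow_diag:
  assumes u: "unitary W" and H: "H = W ** diagm (\<lambda>i. of_real (lam i)) ** mat_adj W"
  shows "matpow (cscale_mat c H) k = W ** diagm (\<lambda>i. (c * of_real (lam i)) ^ k) ** mat_adj W"
proof (induction k)
  case 0
  have "W ** diagm (\<lambda>i. 1) ** mat_adj W = mat 1" using u by (simp add: diagm_one unitary_def)
  thus ?case by simp
next
  case (Suc k)
  have WW: "mat_adj W ** W = mat 1" using u by (simp add: unitary_def)
  have "matpow (cscale_mat c H) (Suc k) = cscale_mat c H ** (W ** diagm (\<lambda>i. (c * of_real (lam i)) ^ k) ** mat_adj W)"
    by (simp add: Suc.IH)
  also have "\<dots> = cscale_mat c (W ** diagm (\<lambda>i. of_real (lam i)) ** (mat_adj W ** W)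
          ** diagm (\<lambda>i. (c * of_real (lam i)) ^ k) ** mat_adj W)"
    by (simp add: H cscale_mult_left matrix_mul_assoc)
  also have "\<dots> = cscale_mat c (W ** (diagm (\<lambda>i. of_real (lam i)) ** diagm (\<lambda>i. (c * of_real (lam i)) ^ k)) ** mat_adj W)"
    by (simp add: WW matrix_mul_assoc)
  also have "\<dots> = W ** cscale_mat c (diagm (\<lambda>i. of_real (lam i)) ** diagm (\<lambda>i. (c * of_real (lam i)) ^ k)) ** mat_adj W"
    by (simp add: cscale_mult_left cscale_mult_right)
  also have "cscale_mat c (diagm (\<lambda>i. of_real (lam i)) ** diagm (\<lambda>i. (c * of_real (lam i)) ^ k))
      = diagm (\<lambda>i. (c * of_real (lam i)) ^ Suc k)"
    by (simp add: diagm_mult vec_eq_iff algebra_simps)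
  finally show ?case .
qed

lemma mexp_diag:
  assumes u: "unitary W" and H: "H = W ** diagm (\<lambda>i. of_real (lam i)) ** mat_adj W"
  shows "mexp (cscale_mat c H) = W ** diagm (\<lambda>i. exp (c * of_real (lam i))) ** mat_adj W"
proof -
  have "(\<lambda>k. (1 / fact k) *\<^sub>R matpow (cscale_mat c H) k)
        = (\<lambda>k. W ** diagm (\<lambda>i. (c * of_real (lam i)) ^ k /\<^sub>R fact k) ** mat_adj W)"
  proof (rule ext)
    fix k
    have "(1 / fact k) *\<^sub>R (W ** diagm (\<lambda>i. (c * of_real (lam i)) ^ k) ** mat_adj W)
        = W ** ((1 / fact k) *\<^sub>R diagm (\<lambda>i. (c * of_real (lam i)) ^ k)) ** mat_adj W"
      by (simp add: scaleR_mult_left scaleR_mult_right)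
    also have "(1 / fact k) *\<^sub>R diagm (\<lambda>i. (c * of_real (lam i)) ^ k)
        = diagm (\<lambda>i. (c * of_real (lam i)) ^ k /\<^sub>R fact k)"
      by (simp add: vec_eq_iff divide_inverse mult.commute)
    finally show "(1 / fact k) *\<^sub>R matpow (cscale_mat c H) k
        = W ** diagm (\<lambda>i. (c * of_real (lam i)) ^ k /\<^sub>R fact k) ** mat_adj W"
      by (simp only: matpow_diag[OF u H])
  qed
  moreover have "(\<lambda>k. W ** diagm (\<lambda>i. (c * of_real (lam i)) ^ k /\<^sub>R fact k) ** mat_adj W) sums
      (W ** diagm (\<lambda>i. exp (c * of_real (lam i))) ** mat_adj W)"
    by (rule bounded_linear.sums[OF bl_conj], rule diagm_sums, rule exp_converges)
  ultimately show ?thesis unfolding mexp_def by (simp only: sums_unique[symmetric])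
qed

definition ediag :: "('n::finite \<Rightarrow> real) \<Rightarrow> real \<Rightarrow> 'n cmat" where
  "ediag lam t = diagm (\<lambda>i. exp (- \<i> * of_real t * of_real (lam i)))"

lemma ediag_deriv:
  "(ediag lam has_vector_derivative diagm (\<lambda>i. - \<i> * of_real (lam i) * exp (- \<i> * of_real t * of_real (lam i)))) (at t)"
proof -
  have e: "((\<lambda>s. exp (- \<i> * of_real s * of_real (lam j))) has_vector_derivative
      (- \<i> * of_real (lam j) * exp (- \<i> * of_real t * of_real (lam j)))) (at t)" for j
  proof -
    have "((\<lambda>z. exp (z * (- \<i> * of_real (lam j)))) has_field_derivative
        exp (of_real t * (- \<i> * of_real (lam j))) * (- \<i> * of_real (lam j))) (at (of_real t))"
      by (auto intro!: derivative_eq_intros)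
    from has_vector_derivative_real_field[OF this]
    show ?thesis by (simp add: algebra_simps)
  qed
  have "((\<lambda>s. \<Sum>j\<in>UNIV. cscale_mat (exp (- \<i> * of_real s * of_real (lam j))) (diagm (\<lambda>k. if k = j then 1 else 0)))
      has_vector_derivative (\<Sum>j\<in>UNIV. cscale_mat (- \<i> * of_real (lam j) * exp (- \<i> * of_real t * of_real (lam j)))
         (diagm (\<lambda>k. if k = j then 1 else 0)))) (at t)"
    by (intro has_vector_derivative_sum bounded_linear.has_vector_derivative[OF bl_cscale_left] e)
  thus ?thesis unfolding ediag_def by (simp only: diagm_basis[symmetric])
qed

lemma unit_exp: "Re z = 0 \<Longrightarrow> cnj (exp z) * exp z = 1"
proof -
  assume r: "Re z = 0"
  have "cnj (exp z) * exp z = exp (cnj z + z)" by (simp add: exp_cnj exp_add)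
  also have "cnj z + z = 0" using r by (simp add: complex_eq_iff)
  finally show ?thesis by simp
qed

lemma ediag_unitary: "unitary (ediag lam t)"
proof -
  have "mat_adj (ediag lam t) ** ediag lam t = diagm (\<lambda>i. 1)"
    unfolding ediag_def diagm_adj diagm_mult
    by (rule arg_cong[where f=diagm], rule ext, rule unit_exp) simp
  hence "mat_adj (ediag lam t) ** ediag lam t = mat 1" by (simp add: diagm_one)
  thus ?thesis by (simp add: unitary_def matrix_left_right_inverse)
qed

definition Eop :: "'n::finite cmat \<Rightarrow> real \<Rightarrow> 'n cmat" where
  "Eop H t = mexp (cscale_mat (- \<i> * complex_of_real t) H)"

lemma Eop_diag:
  assumes u: "unitary W" and H: "H = W ** diagm (\<lambda>i. of_real (lam i)) ** mat_adj W"
  shows "Eop H t = W ** ediag lam t ** mat_adj W"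
  unfolding Eop_def ediag_def by (simp add: mexp_diag[OF u H])

lemma Eop_unitary: "hermitian H \<Longrightarrow> unitary (Eop H t)"
proof -
  assume "hermitian H"
  then obtain W lam where u: "unitary W" and H: "H = W ** diagm (\<lambda>i. of_real (lam i)) ** mat_adj W"
    using spectral by blast
  show ?thesis unfolding Eop_diag[OF u H]
    by (intro unitary_mult u unitary_adj ediag_unitary)
qed

lemma Eop_deriv:
  assumes "hermitian H"
  shows "(Eop H has_vector_derivative cscale_mat (- \<i>) (H ** Eop H t)) (at t)"
proof -
  obtain W lam where u: "unitary W" and H: "H = W ** diagm (\<lambda>i. of_real (lam i)) ** mat_adj W"
    using spectral assms by blast
  have WW: "mat_adj W ** W = mat 1" using u by (simp add: unitary_def)
  have e: "Eop H = (\<lambda>s. W ** ediag lam s ** mat_adj W)" using Eop_diag[OF u H] by auto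
  have "((\<lambda>s. W ** ediag lam s ** mat_adj W) has_vector_derivative
      W ** diagm (\<lambda>i. - \<i> * of_real (lam i) * exp (- \<i> * of_real t * of_real (lam i))) ** mat_adj W) (at t)"
    by (rule bounded_linear.has_vector_derivative[OF bl_conj ediag_deriv])
  moreover have "W ** diagm (\<lambda>i. - \<i> * of_real (lam i) * exp (- \<i> * of_real t * of_real (lam i))) ** mat_adj W
      = cscale_mat (- \<i>) (H ** Eop H t)"
  proof -
    have "H ** Eop H t = W ** diagm (\<lambda>i. of_real (lam i)) ** (mat_adj W ** W) ** ediag lam t ** mat_adj W"
      unfolding e by (subst (1) H) (simp add: matrix_mul_assoc)
    hence "H ** Eop H t = W ** (diagm (\<lambda>i. of_real (lam i)) ** ediag lam t) ** mat_adj W"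
      by (simp add: WW matrix_mul_assoc)
    hence "cscale_mat (- \<i>) (H ** Eop H t) = W ** cscale_mat (- \<i>) (diagm (\<lambda>i. of_real (lam i)) ** ediag lam t) ** mat_adj W"
      by (simp add: cscale_mult_left cscale_mult_right)
    also have "cscale_mat (- \<i>) (diagm (\<lambda>i. of_real (lam i)) ** ediag lam t)
        = diagm (\<lambda>i. - \<i> * of_real (lam i) * exp (- \<i> * of_real t * of_real (lam i)))"
      by (simp add: ediag_def diagm_mult vec_eq_iff)
    finally show ?thesis by simp
  qed
  ultimately show ?thesis unfolding e by simp
qed

lemma omega_nonneg: "hermitian H \<Longrightarrow> 0 \<le> omega_max H"
proof -
  assume "hermitian H"
  then obtain W lam where u: "unitary W" and H: "H = W ** diagm (\<lambda>i. of_real (lam i)) ** mat_adj W"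
    using spectral by blast
  have "Min (range lam) \<le> lam undefined" by simp
  also have "\<dots> \<le> Max (range lam)" by simp
  finally show ?thesis using omega_diag[OF u H] by simp
qed

lemma bbl_mm: "bounded_bilinear (\<lambda>(A::'n::finite cmat) (B::'n cmat). A ** B)"
  by (rule bilinear_conv_bounded_bilinear[THEN iffD1])
     (auto simp: bilinear_def intro!: linearI simp: mult_add_left mult_add_right scaleR_mult_left scaleR_mult_right)

lemma bl_adj: "bounded_linear (mat_adj :: 'n::finite cmat \<Rightarrow> 'n cmat)"
  by (rule linear_conv_bounded_linear[THEN iffD1], rule linearI)
     (simp_all add: mat_adj_add mat_adj_scaleR)

definition Dc :: "'n::finite cmat \<Rightarrow> 'n cmat \<Rightarrow> 'n cmat" where
  "Dc H X = cscale_mat \<i> (H ** X - X ** H)"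

lemma bl_Dc: "bounded_linear (Dc H)"
  unfolding Dc_def
  by (rule linear_conv_bounded_linear[THEN iffD1], rule linearI)
     (simp_all add: mult_add_left mult_add_right scaleR_mult_left scaleR_mult_right vec_eq_iff algebra_simps)

lemma Dc_bound: "hermitian H \<Longrightarrow> op_norm (Dc H X) \<le> omega_max H * op_norm X"
  unfolding Dc_def using op_norm_cscale[of \<i> "H ** X - X ** H"] comm_bound[of H X] by simp

lemma layer_deriv:
  assumes herm: "hermitian H"
    and Y: "(Y has_vector_derivative Y') (at t)"
  shows "((\<lambda>s. mat_adj (Eop H s) ** Y s ** Eop H s) has_vector_derivative
          (mat_adj (Eop H t) ** (Dc H (Y t) + Y') ** Eop H t)) (at t)"
proof -
  have dE: "(Eop H has_vector_derivative cscale_mat (- \<i>) (H ** Eop H t)) (at t)"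
    by (rule Eop_deriv[OF herm])
  have dA: "((\<lambda>s. mat_adj (Eop H s)) has_vector_derivative mat_adj (cscale_mat (- \<i>) (H ** Eop H t))) (at t)"
    by (rule bounded_linear.has_vector_derivative[OF bl_adj dE])
  have d1: "((\<lambda>s. mat_adj (Eop H s) ** Y s) has_vector_derivative
      (mat_adj (Eop H t) ** Y' + mat_adj (cscale_mat (- \<i>) (H ** Eop H t)) ** Y t)) (at t)"
    using bounded_bilinear.has_vector_derivative[OF bbl_mm dA Y] by simp
  have d2: "((\<lambda>s. mat_adj (Eop H s) ** Y s ** Eop H s) has_vector_derivative
      (mat_adj (Eop H t) ** Y t ** cscale_mat (- \<i>) (H ** Eop H t) +
       (mat_adj (Eop H t) ** Y' + mat_adj (cscale_mat (- \<i>) (H ** Eop H t)) ** Y t) ** Eop H t)) (at t)"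
    using bounded_bilinear.has_vector_derivative[OF bbl_mm d1 dE] by simp
  have hA: "mat_adj H = H" using herm by (simp add: hermitian_def)
  have "mat_adj (Eop H t) ** Y t ** cscale_mat (- \<i>) (H ** Eop H t) +
       (mat_adj (Eop H t) ** Y' + mat_adj (cscale_mat (- \<i>) (H ** Eop H t)) ** Y t) ** Eop H t
      = mat_adj (Eop H t) ** (Dc H (Y t) + Y') ** Eop H t"
    by (simp add: Dc_def mat_adj_cscale mat_adj_mult hA cscale_mult_left cscale_mult_right
        mult_add_left mult_add_right mult_diff_left mult_diff_right matrix_mul_assoc
        cscale_diff vec_eq_iff algebra_simps)
  with d2 show ?thesis by simp
qed

fun Gs :: "('n::finite cmat \<Rightarrow> 'n cmat) \<Rightarrow> nat \<Rightarrow> (nat \<Rightarrow> real \<Rightarrow> 'n cmat) \<Rightarrow> real \<Rightarrow> 'n cmat" where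
  "Gs D 0 Z t = Z 0 t"
| "Gs D (Suc m) Z t = D (Gs D m Z t) + Gs D m (\<lambda>l. Z (Suc l)) t"

lemma Gs_deriv:
  assumes D: "bounded_linear D"
  shows "(\<And>l s. (Z l has_vector_derivative Z (Suc l) s) (at s)) \<Longrightarrow>
    (Gs D m Z has_vector_derivative Gs D m (\<lambda>l. Z (Suc l)) t) (at t)"
proof (induction m arbitrary: Z t)
  case 0 thus ?case by (simp add: 0)
next
  case (Suc m)
  have 1: "(Gs D m Z has_vector_derivative Gs D m (\<lambda>l. Z (Suc l)) t) (at t)"
    by (rule Suc.IH) (rule Suc.prems)
  have 2: "(Gs D m (\<lambda>l. Z (Suc l)) has_vector_derivative Gs D m (\<lambda>l. Z (Suc (Suc l))) t) (at t)"
    by (rule Suc.IH) (rule Suc.prems)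
  have "((\<lambda>s. D (Gs D m Z s) + Gs D m (\<lambda>l. Z (Suc l)) s) has_vector_derivative
      D (Gs D m (\<lambda>l. Z (Suc l)) t) + Gs D m (\<lambda>l. Z (Suc (Suc l))) t) (at t)"
    by (intro has_vector_derivative_add bounded_linear.has_vector_derivative[OF D 1] 2)
  moreover have "Gs D (Suc m) Z = (\<lambda>s. D (Gs D m Z s) + Gs D m (\<lambda>l. Z (Suc l)) s)"
    by (rule ext) simp
  ultimately show ?case by simp
qed

lemma Gs_bound:
  assumes D: "\<And>Y. op_norm (D Y) \<le> w * op_norm Y" and w: "0 \<le> w" and a: "0 \<le> a"
  shows "(\<And>l. op_norm (Z l t) \<le> a ^ l * c) \<Longrightarrow> op_norm (Gs D m Z t) \<le> (w + a) ^ m * c"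
proof (induction m arbitrary: Z c)
  case 0 thus ?case using 0[of 0] by simp
next
  case (Suc m)
  have 1: "op_norm (Gs D m Z t) \<le> (w + a) ^ m * c" by (rule Suc.IH) (rule Suc.prems)
  have 2: "op_norm (Gs D m (\<lambda>l. Z (Suc l)) t) \<le> (w + a) ^ m * (a * c)"
  proof (rule Suc.IH)
    fix l
    have "op_norm (Z (Suc l) t) \<le> a ^ Suc l * c" by (rule Suc.prems)
    thus "op_norm (Z (Suc l) t) \<le> a ^ l * (a * c)" by (simp add: algebra_simps)
  qed
  have "op_norm (Gs D (Suc m) Z t) \<le> op_norm (D (Gs D m Z t)) + op_norm (Gs D m (\<lambda>l. Z (Suc l)) t)"
    by (simp add: op_norm_add)
  also have "\<dots> \<le> w * ((w + a) ^ m * c) + (w + a) ^ m * (a * c)"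
    by (intro add_mono order_trans[OF D] mult_left_mono 1 2 w)
  also have "\<dots> = (w + a) ^ Suc m * c" by (simp add: algebra_simps)
  finally show ?case .
qed

lemma foldr_mult:
  "foldr (\<lambda>k A. G k ** A) xs (B::'n::finite cmat) = foldr (\<lambda>k A. G k ** A) xs (mat 1) ** B"
  by (induct xs) (simp_all add: matrix_mul_assoc)

lemma circ_Suc:
  "circ_unitary (Suc K) V H t = circ_unitary K V H t ** (V (Suc K) ** Eop (H (Suc K)) t)"
proof -
  have "[1..<Suc K + 1] = [1..<K + 1] @ [Suc K]" by simp
  thus ?thesis unfolding circ_unitary_def Eop_def
    by (simp only: foldr_append) (simp add: foldr_mult[where B="V (Suc K) ** _"])
qed

lemma chan_Suc:
  "chan (Suc K) V H t X = mat_adj (Eop (H (Suc K)) t) **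
     (mat_adj (V (Suc K)) ** chan K V H t X ** V (Suc K)) ** Eop (H (Suc K)) t"
  unfolding chan_def circ_Suc by (simp add: mat_adj_mult matrix_mul_assoc)

fun Fd :: "(nat \<Rightarrow> 'n::finite cmat) \<Rightarrow> (nat \<Rightarrow> 'n cmat) \<Rightarrow> 'n cmat \<Rightarrow> nat \<Rightarrow> nat \<Rightarrow> real \<Rightarrow> 'n cmat" where
  "Fd V H Ob 0 m t = (if m = 0 then Ob else 0)"
| "Fd V H Ob (Suc j) m t = mat_adj (Eop (H (Suc j)) t) **
     Gs (Dc (H (Suc j))) m (\<lambda>l s. mat_adj (V (Suc j)) ** Fd V H Ob j l s ** V (Suc j)) t ** Eop (H (Suc j)) t"

lemma Fd_chan: "Fd V H Ob j 0 t = chan j V H t Ob"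
proof (induction j)
  case 0 thus ?case by (simp add: chan_def circ_unitary_def)
next
  case (Suc j) thus ?case by (simp add: chan_Suc)
qed

lemma Fd_deriv:
  "(\<forall>k\<in>{1..j}. hermitian (H k)) \<Longrightarrow> (Fd V H Ob j m has_vector_derivative Fd V H Ob j (Suc m) t) (at t)"
proof (induction j arbitrary: m t)
  case 0
  have "Fd V H Ob 0 m = (\<lambda>s. if m = 0 then Ob else 0)" by (rule ext) simp
  thus ?case by simp
next
  case (Suc j)
  have herm: "hermitian (H (Suc j))" using Suc.prems by simp
  have IH: "\<And>m t. (Fd V H Ob j m has_vector_derivative Fd V H Ob j (Suc m) t) (at t)"
    by (rule Suc.IH) (use Suc.prems in auto)
  define Z where "Z = (\<lambda>l s. mat_adj (V (Suc j)) ** Fd V H Ob j l s ** V (Suc j))"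
  have dZ: "(Z l has_vector_derivative Z (Suc l) s) (at s)" for l s
    unfolding Z_def by (rule bounded_linear.has_vector_derivative[OF bl_conj IH])
  have dG: "(Gs (Dc (H (Suc j))) m Z has_vector_derivative Gs (Dc (H (Suc j))) m (\<lambda>l. Z (Suc l)) t) (at t)"
    by (rule Gs_deriv[OF bl_Dc]) (rule dZ)
  have "Fd V H Ob (Suc j) m = (\<lambda>s. mat_adj (Eop (H (Suc j)) s) ** Gs (Dc (H (Suc j))) m Z s ** Eop (H (Suc j)) s)"
    by (rule ext) (simp add: Z_def)
  moreover have "Fd V H Ob (Suc j) (Suc m) t = mat_adj (Eop (H (Suc j)) t) **
      (Dc (H (Suc j)) (Gs (Dc (H (Suc j))) m Z t) + Gs (Dc (H (Suc j))) m (\<lambda>l. Z (Suc l)) t) ** Eop (H (Suc j)) t"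
    by (simp add: Z_def)
  ultimately show ?case using layer_deriv[OF herm dG] by simp
qed

lemma Fd_bound:
  "(\<forall>k\<in>{1..j}. hermitian (H k) \<and> unitary (V k)) \<Longrightarrow>
     op_norm (Fd V H Ob j m t) \<le> (\<Sum>i=1..j. omega_max (H i)) ^ m * op_norm Ob"
proof (induction j arbitrary: m t)
  case 0 thus ?case by (cases m) (simp_all add: op_norm_nonneg)
next
  case (Suc j)
  have herm: "hermitian (H (Suc j))" and uV: "unitary (V (Suc j))" using Suc.prems by auto
  have IH: "\<And>m t. op_norm (Fd V H Ob j m t) \<le> (\<Sum>i=1..j. omega_max (H i)) ^ m * op_norm Ob"
    by (rule Suc.IH) (use Suc.prems in auto)
  define a where "a = (\<Sum>i=1..j. omega_max (H i))"
  have a0: "0 \<le> a" unfolding a_def using Suc.prems by (intro sum_nonneg omega_nonneg) auto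
  define Z where "Z = (\<lambda>l s. mat_adj (V (Suc j)) ** Fd V H Ob j l s ** V (Suc j))"
  have "op_norm (Fd V H Ob (Suc j) m t) \<le> op_norm (Gs (Dc (H (Suc j))) m Z t)"
    by (simp add: Z_def op_norm_conj[OF Eop_unitary[OF herm]])
  also have "\<dots> \<le> (omega_max (H (Suc j)) + a) ^ m * op_norm Ob"
  proof (rule Gs_bound[OF Dc_bound[OF herm] omega_nonneg[OF herm] a0])
    fix l
    show "op_norm (Z l t) \<le> a ^ l * op_norm Ob"
      unfolding Z_def a_def by (rule order_trans[OF op_norm_conj[OF uV] IH])
  qed
  also have "omega_max (H (Suc j)) + a = (\<Sum>i=1..Suc j. omega_max (H i))"
    by (simp add: a_def)
  finally show ?case .
qed

definition Ld :: "'n::finite cmat \<Rightarrow> 'n cmat \<Rightarrow> nat \<Rightarrow> (nat \<Rightarrow> 'n cmat) \<Rightarrow> (nat \<Rightarrow> 'n cmat) \<Rightarrow> nat \<Rightarrow> real \<Rightarrow> real" where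
  "Ld \<rho> Ob K V H m t = Re (trace (\<rho> ** Fd V H Ob K m t))"

lemma trace_scaleR: "trace (c *\<^sub>R (A::'n::finite cmat)) = of_real c * trace A"
  by (simp add: trace_def sum_distrib_left)

lemma bl_trRe: "bounded_linear (\<lambda>X::'n::finite cmat. Re (trace (\<rho> ** X)))"
  by (rule linear_conv_bounded_linear[THEN iffD1], rule linearI)
     (simp_all add: mult_add_right trace_add scaleR_mult_right trace_scaleR)

lemma Ld_deriv:
  assumes "\<forall>k\<in>{1..K}. hermitian (H k)"
  shows "DERIV (Ld \<rho> Ob K V H m) t :> Ld \<rho> Ob K V H (Suc m) t"
proof -
  have "((\<lambda>s. Re (trace (\<rho> ** Fd V H Ob K m s))) has_vector_derivative Re (trace (\<rho> ** Fd V H Ob K (Suc m) t))) (at t)"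
    by (rule bounded_linear.has_vector_derivative[OF bl_trRe Fd_deriv[OF assms]])
  thus ?thesis unfolding Ld_def has_real_derivative_iff_has_vector_derivative .
qed

lemma Ld_bound:
  assumes "\<forall>k\<in>{1..K}. hermitian (H k) \<and> unitary (V k)" and "density_operator \<rho>"
  shows "\<bar>Ld \<rho> Ob K V H m t\<bar> \<le> (\<Sum>i=1..K. omega_max (H i)) ^ m * op_norm Ob"
  unfolding Ld_def using trace_bound_Re[OF assms(2)] Fd_bound[OF assms(1)] order_trans by blast

lemma loss_Ld: "loss \<rho> Ob K V H t = Ld \<rho> Ob K V H 0 t"
  by (simp add: loss_def Ld_def Fd_chan)

lemma chan2_Fd:
  assumes "\<forall>k\<in>{1..K}. hermitian (H k)"
  shows "chan2 K V H \<phi> Ob = Fd V H Ob K 2 \<phi>"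
proof -
  have "(\<lambda>s. chan K V H s Ob) = Fd V H Ob K 0" by (rule ext) (simp add: Fd_chan)
  hence "(\<lambda>t. vector_derivative (\<lambda>s. chan K V H s Ob) (at t)) = Fd V H Ob K 1"
    by (auto intro!: vector_derivative_at Fd_deriv[OF assms])
  hence "chan2 K V H \<phi> Ob = vector_derivative (Fd V H Ob K 1) (at \<phi>)"
    by (simp add: chan2_def)
  also have "\<dots> = Fd V H Ob K 2 \<phi>"
    by (rule vector_derivative_at) (simp add: Fd_deriv[OF assms] numeral_2_eq_2)
  finally show ?thesis .
qed

lemma even_taylor:
  fixes d :: "nat \<Rightarrow> real \<Rightarrow> real"
  assumes der: "\<And>m x. DERIV (d m) x :> d (Suc m) x"
    and bd: "\<And>x. \<bar>d 4 x\<bar> \<le> D"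
  shows "\<bar>d 0 (\<phi> + s) + d 0 (\<phi> - s) - 2 * d 0 \<phi> - d 2 \<phi> * s\<^sup>2\<bar> \<le> D * s ^ 4 / 12"
proof -
  define e where "e m x = d m (\<phi> + x)" for m x
  have de: "\<forall>m x. DERIV (e m) x :> e (Suc m) x"
  proof (intro allI)
    fix m x
    have "DERIV (d m) (\<phi> + x) :> d (Suc m) (\<phi> + x)" by (rule der)
    hence "DERIV (\<lambda>x. d m (x + \<phi>)) x :> d (Suc m) (x + \<phi>)"
      using DERIV_shift[of "d m" "d (Suc m) (x + \<phi>)" x \<phi>] by (simp add: add.commute)
    moreover have "e m = (\<lambda>x. d m (x + \<phi>))" by (rule ext) (simp add: e_def add.commute)
    moreover have "e (Suc m) x = d (Suc m) (x + \<phi>)" by (simp add: e_def add.commute)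
    ultimately show "DERIV (e m) x :> e (Suc m) x" by simp
  qed
  obtain t1 where t1: "d 0 (\<phi> + s) = (\<Sum>m<4. e m 0 / fact m * s ^ m) + e 4 t1 / fact 4 * s ^ 4"
    using Maclaurin_all_le[of e "e 0", OF refl de, of s 4] by (auto simp: e_def)
  obtain t2 where t2: "d 0 (\<phi> - s) = (\<Sum>m<4. e m 0 / fact m * (-s) ^ m) + e 4 t2 / fact 4 * (-s) ^ 4"
    using Maclaurin_all_le[of e "e 0", OF refl de, of "-s" 4] by (auto simp: e_def)
  have s4: "(\<Sum>m<4. f m) = f 0 + f 1 + f 2 + f 3" for f :: "nat \<Rightarrow> real"
    by (simp add: eval_nat_numeral)
  have f: "fact 2 = (2::real)" "fact 3 = (6::real)" "fact 4 = (24::real)"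
    by (simp_all add: fact_numeral)
  have "d 0 (\<phi> + s) + d 0 (\<phi> - s) - 2 * d 0 \<phi> - d 2 \<phi> * s\<^sup>2 = (e 4 t1 + e 4 t2) / 24 * s ^ 4"
    unfolding t1 t2 s4 f by (simp add: e_def power2_eq_square power3_eq_cube field_simps
        eval_nat_numeral)
  also have "\<bar>\<dots>\<bar> \<le> (D + D) / 24 * s ^ 4"
  proof -
    have "\<bar>e 4 t1 + e 4 t2\<bar> \<le> D + D" using bd[of "\<phi> + t1"] bd[of "\<phi> + t2"] by (simp add: e_def)
    hence "\<bar>(e 4 t1 + e 4 t2) / 24\<bar> \<le> (D + D) / 24" by simp
    moreover have "0 \<le> s ^ 4" by (simp add: zero_le_even_power)
    ultimately have "\<bar>(e 4 t1 + e 4 t2) / 24\<bar> * s ^ 4 \<le> (D + D) / 24 * s ^ 4"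
      by (rule mult_right_mono)
    moreover have "\<bar>(e 4 t1 + e 4 t2) / 24 * s ^ 4\<bar> = \<bar>(e 4 t1 + e 4 t2) / 24\<bar> * s ^ 4"
      by (simp only: abs_mult) (simp add: zero_le_even_power)
    ultimately show ?thesis by simp
  qed
  finally show ?thesis by simp
qed

lemma unif_int:
  fixes g :: "real \<Rightarrow> real"
  assumes r: "0 < r" and g: "continuous_on UNIV g"
  shows "integral\<^sup>L (uniform_measure lborel {\<phi> - r .. \<phi> + r}) g = integral {\<phi> - r .. \<phi> + r} g / (2 * r)"
proof -
  define S where "S = {\<phi> - r .. \<phi> + r}"
  have em: "emeasure lborel S = ennreal (2 * r)" using r by (simp add: S_def)
  have dens: "(\<lambda>x. indicator S x / emeasure lborel S) = (\<lambda>x. ennreal (indicator S x / (2 * r)))"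
  proof (rule ext)
    fix x
    show "indicator S x / emeasure lborel S = ennreal (indicator S x / (2 * r))"
      unfolding em using r by (cases "x \<in> S") (simp_all add: divide_ennreal[symmetric])
  qed
  have gm: "g \<in> borel_measurable lborel"
    using borel_measurable_continuous_onI[OF g] by simp
  have "integral\<^sup>L (uniform_measure lborel S) g = integral\<^sup>L lborel (\<lambda>x. (indicator S x / (2 * r)) *\<^sub>R g x)"
    unfolding uniform_measure_def dens
  proof (rule integral_density[OF gm])
    show "(\<lambda>x. indicator S x / (2 * r)) \<in> borel_measurable lborel" unfolding S_def by measurable
    show "AE x in lborel. 0 \<le> indicator S x / (2 * r)" by (rule AE_I2) (simp add: r less_imp_le)
  qed
  also have "\<dots> = integral\<^sup>L lborel (\<lambda>x. indicator S x *\<^sub>R g x) / (2 * r)"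
  proof -
    have "(\<lambda>x. (indicator S x / (2 * r)) *\<^sub>R g x) = (\<lambda>x. (indicator S x *\<^sub>R g x) / (2 * r))"
      by (rule ext) simp
    thus ?thesis by (simp only: integral_divide_zero)
  qed
  also have "integral\<^sup>L lborel (\<lambda>x. indicator S x *\<^sub>R g x) = integral S g"
  proof -
    have si: "set_integrable lborel S g"
      unfolding set_integrable_def S_def
      by (rule borel_integrable_compact) (auto intro: continuous_on_subset[OF g])
    show ?thesis using set_borel_integral_eq_integral(2)[OF si]
      by (simp add: set_lebesgue_integral_def)
  qed
  finally show ?thesis by (simp add: S_def)
qed

lemma reflect_int:
  fixes g :: "real \<Rightarrow> real"
  assumes g: "continuous_on UNIV g"
  shows "integral {\<phi> - r .. \<phi> + r} (\<lambda>x. g (2 * \<phi> - x)) = integral {\<phi> - r .. \<phi> + r} g"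
proof -
  have gi: "(g has_integral integral {\<phi> - r .. \<phi> + r} g) {\<phi> - r .. \<phi> + r}"
    by (intro integrable_integral integrable_continuous_interval continuous_on_subset[OF g]) auto
  have "((\<lambda>x. g ((-1) *\<^sub>R x + 2 * \<phi>)) has_integral (1 / \<bar>-1\<bar> ^ DIM(real)) *\<^sub>R integral {\<phi> - r .. \<phi> + r} g)
      ((\<lambda>x. (1 / (-1)) *\<^sub>R x + - ((1 / (-1)) *\<^sub>R (2 * \<phi>))) ` {\<phi> - r .. \<phi> + r})"
    using has_integral_affinity[OF gi[folded cbox_interval], of "-1" "2 * \<phi>"] by (simp only: cbox_interval)
  moreover have "(\<lambda>x. (1 / (-1)) *\<^sub>R x + - ((1 / (-1)) *\<^sub>R (2 * \<phi>))) ` {\<phi> - r .. \<phi> + r} = {\<phi> - r .. \<phi> + r}"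
  proof -
    have "(\<lambda>x::real. (1 / (-1)) *\<^sub>R x + - ((1 / (-1)) *\<^sub>R (2 * \<phi>))) = (\<lambda>x. 2 * \<phi> - x)" by auto
    moreover have "(\<lambda>x::real. 2 * \<phi> - x) ` {\<phi> - r .. \<phi> + r} = {\<phi> - r .. \<phi> + r}"
    proof
      show "(\<lambda>x. 2 * \<phi> - x) ` {\<phi> - r .. \<phi> + r} \<subseteq> {\<phi> - r .. \<phi> + r}" by auto
      show "{\<phi> - r .. \<phi> + r} \<subseteq> (\<lambda>x. 2 * \<phi> - x) ` {\<phi> - r .. \<phi> + r}"
      proof
        fix y assume "y \<in> {\<phi> - r .. \<phi> + r}"
        hence "2 * \<phi> - y \<in> {\<phi> - r .. \<phi> + r}" "y = 2 * \<phi> - (2 * \<phi> - y)" by auto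
        thus "y \<in> (\<lambda>x. 2 * \<phi> - x) ` {\<phi> - r .. \<phi> + r}" by blast
      qed
    qed
    ultimately show ?thesis by simp
  qed
  ultimately have "((\<lambda>x. g (2 * \<phi> - x)) has_integral integral {\<phi> - r .. \<phi> + r} g) {\<phi> - r .. \<phi> + r}"
    by simp
  thus ?thesis by (rule integral_unique)
qed

lemma poly_int:
  assumes r: "0 \<le> r"
  shows "((\<lambda>x. (x - \<phi>) ^ k) has_integral (r ^ Suc k - (- r) ^ Suc k) / real (Suc k)) {\<phi> - r .. \<phi> + r}"
proof -
  have "((\<lambda>x. (x - \<phi>) ^ k) has_integral ((\<phi> + r - \<phi>) ^ Suc k / real (Suc k) - (\<phi> - r - \<phi>) ^ Suc k / real (Suc k)))
      {\<phi> - r .. \<phi> + r}"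
  proof (rule fundamental_theorem_of_calculus)
    show "\<phi> - r \<le> \<phi> + r" using r by simp
    fix x assume "x \<in> {\<phi> - r .. \<phi> + r}"
    have d1: "((\<lambda>x. x - \<phi>) has_real_derivative 1) (at x)" using DERIV_diff[OF DERIV_ident DERIV_const[of \<phi>]] by simp
    have "((\<lambda>x. (x - \<phi>) ^ Suc k / real (Suc k)) has_real_derivative
        of_nat (Suc k) * (1 * (x - \<phi>) ^ (Suc k - Suc 0)) / real (Suc k)) (at x)"
      by (rule DERIV_cdivide[OF DERIV_power[OF d1]])
    hence "((\<lambda>x. (x - \<phi>) ^ Suc k / real (Suc k)) has_real_derivative (x - \<phi>) ^ k) (at x)"
      by simp
    thus "((\<lambda>x. (x - \<phi>) ^ Suc k / real (Suc k)) has_vector_derivative (x - \<phi>) ^ k) (at x within {\<phi> - r .. \<phi> + r})"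
      by (simp add: has_real_derivative_iff_has_vector_derivative has_vector_derivative_at_within)
  qed
  thus ?thesis by (simp add: diff_divide_distrib add_divide_distrib)
qed

lemma pointwise_low:
  fixes x y c q R \<epsilon> B :: real
  assumes e: "0 < \<epsilon>" "\<epsilon> \<le> 1" and R: "\<bar>(x + y) / 2 - c - q\<bar> \<le> B"
  shows "(1 - \<epsilon>) * q\<^sup>2 - (1 / \<epsilon> - 1) * B\<^sup>2 \<le> ((x - c)\<^sup>2 + (y - c)\<^sup>2) / 2"
proof -
  define Rr where "Rr = (x + y) / 2 - c - q"
  have 1: "((x + y) / 2 - c)\<^sup>2 \<le> ((x - c)\<^sup>2 + (y - c)\<^sup>2) / 2"
  proof -
    have "((x - c)\<^sup>2 + (y - c)\<^sup>2) / 2 - ((x + y) / 2 - c)\<^sup>2 = ((x - y) / 2)\<^sup>2"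
      by (simp add: power2_eq_square field_simps)
    thus ?thesis by (smt (verit) zero_le_power2)
  qed
  have 2: "(1 - \<epsilon>) * q\<^sup>2 - (1 / \<epsilon> - 1) * Rr\<^sup>2 \<le> (q + Rr)\<^sup>2"
  proof -
    have "\<epsilon> * ((q + Rr)\<^sup>2 - ((1 - \<epsilon>) * q\<^sup>2 - (1 / \<epsilon> - 1) * Rr\<^sup>2)) = (\<epsilon> * q + Rr)\<^sup>2"
      using e by (simp add: power2_eq_square field_simps)
    hence "0 \<le> \<epsilon> * ((q + Rr)\<^sup>2 - ((1 - \<epsilon>) * q\<^sup>2 - (1 / \<epsilon> - 1) * Rr\<^sup>2))" by simp
    hence "0 \<le> (q + Rr)\<^sup>2 - ((1 - \<epsilon>) * q\<^sup>2 - (1 / \<epsilon> - 1) * Rr\<^sup>2)"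
      using e by (simp add: zero_le_mult_iff)
    thus ?thesis by simp
  qed
  have 3: "Rr\<^sup>2 \<le> B\<^sup>2"
  proof -
    have "\<bar>Rr\<bar>\<^sup>2 \<le> B\<^sup>2" using R unfolding Rr_def by (intro power_mono) auto
    thus ?thesis by simp
  qed
  have "0 \<le> 1 / \<epsilon> - 1" using e by (simp add: field_simps)
  hence "(1 / \<epsilon> - 1) * Rr\<^sup>2 \<le> (1 / \<epsilon> - 1) * B\<^sup>2" by (rule mult_left_mono[OF 3])
  moreover have "(q + Rr)\<^sup>2 = ((x + y) / 2 - c)\<^sup>2" by (simp add: Rr_def)
  ultimately show ?thesis using 1 2 by linarith
qed

lemma var_lower:
  fixes d :: "nat \<Rightarrow> real \<Rightarrow> real"
  assumes r: "0 < r"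
    and der: "\<And>m x. DERIV (d m) x :> d (Suc m) x"
    and bd: "\<And>x. \<bar>d 4 x\<bar> \<le> D"
    and e: "0 < \<epsilon>" "\<epsilon> \<le> 1"
  shows "(1 - \<epsilon>) * (d 2 \<phi>)\<^sup>2 * r ^ 4 / 45 - (1 / \<epsilon> - 1) * D\<^sup>2 * r ^ 8 / 5184 \<le> unif_var \<phi> r (d 0)"
proof -
  define L where "L = d 0"
  define S where "S = {\<phi> - r .. \<phi> + r}"
  have contL: "continuous_on UNIV L"
    unfolding L_def by (intro continuous_at_imp_continuous_on ballI) (rule DERIV_isCont[OF der])
  define c where "c = integral\<^sup>L (uniform_measure lborel S) L"
  define g where "g x = (L x - c)\<^sup>2" for x
  have contg: "continuous_on UNIV g" unfolding g_def by (intro continuous_intros contL)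
  have contgR: "continuous_on UNIV (\<lambda>x. g (2 * \<phi> - x))"
    by (intro continuous_on_compose2[OF contg] continuous_intros) auto
  have var: "unif_var \<phi> r (d 0) = integral S g / (2 * r)"
    unfolding unif_var_def Let_def L_def[symmetric] S_def[symmetric] c_def[symmetric] g_def[symmetric]
    using unif_int[OF r contg, of \<phi>] by (simp add: S_def)
  have gi: "(g has_integral integral S g) S"
    unfolding S_def by (intro integrable_integral integrable_continuous_interval continuous_on_subset[OF contg]) auto
  have gRi: "((\<lambda>x. g (2 * \<phi> - x)) has_integral integral S g) S"
  proof -
    have "((\<lambda>x. g (2 * \<phi> - x)) has_integral integral S (\<lambda>x. g (2 * \<phi> - x))) S"
      unfolding S_def by (intro integrable_integral integrable_continuous_interval continuous_on_subset[OF contgR]) auto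
    thus ?thesis unfolding S_def reflect_int[OF contg] .
  qed
  have avg: "((\<lambda>x. (g x + g (2 * \<phi> - x)) / 2) has_integral integral S g) S"
    using has_integral_mult_left[OF has_integral_add[OF gi gRi], of "1/2"] by simp
  define b where "b = d 2 \<phi>"
  define \<gamma> where "\<gamma> = L \<phi> - c"
  define \<kappa> where "\<kappa> = (1 / \<epsilon> - 1) * D\<^sup>2 / 576"
  define low where "low x = (1 - \<epsilon>) * (b / 2)\<^sup>2 * (x - \<phi>) ^ 4 + (1 - \<epsilon>) * (b * \<gamma>) * (x - \<phi>) ^ 2
      + (1 - \<epsilon>) * \<gamma>\<^sup>2 * (x - \<phi>) ^ 0 - \<kappa> * (x - \<phi>) ^ 8" for x
  have I: "((\<lambda>x. (x - \<phi>) ^ k) has_integral 2 * r ^ Suc k / real (Suc k)) S" if "even k" for k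
    using poly_int[of r \<phi> k] r that unfolding S_def by simp
  have lowi: "(low has_integral
      (1 - \<epsilon>) * (b / 2)\<^sup>2 * (2 * r ^ 5 / 5) + (1 - \<epsilon>) * (b * \<gamma>) * (2 * r ^ 3 / 3)
      + (1 - \<epsilon>) * \<gamma>\<^sup>2 * (2 * r ^ 1 / 1) - \<kappa> * (2 * r ^ 9 / 9)) S"
  proof -
    have even_4: "even (4::nat)" and even_2: "even (2::nat)" and even_8: "even (8::nat)" by simp_all
    have i4: "((\<lambda>x. (x - \<phi>) ^ 4) has_integral 2 * r ^ 5 / 5) S" using I[OF even_4] by (simp add: eval_nat_numeral)
    have i2: "((\<lambda>x. (x - \<phi>) ^ 2) has_integral 2 * r ^ 3 / 3) S" using I[OF even_2] by (simp add: eval_nat_numeral)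
    have i0: "((\<lambda>x. (x - \<phi>) ^ 0) has_integral 2 * r ^ 1 / 1) S" using I[of 0] by simp
    have i8: "((\<lambda>x. (x - \<phi>) ^ 8) has_integral 2 * r ^ 9 / 9) S" using I[OF even_8] by (simp add: eval_nat_numeral)
    show ?thesis unfolding low_def
      by (intro has_integral_diff has_integral_add has_integral_mult_right i4 i2 i0 i8)
  qed
  have pw: "low x \<le> (g x + g (2 * \<phi> - x)) / 2" for x
  proof -
    define s where "s = x - \<phi>"
    have x: "x = \<phi> + s" and xR: "2 * \<phi> - x = \<phi> - s" by (simp_all add: s_def)
    have T: "\<bar>d 0 (\<phi> + s) + d 0 (\<phi> - s) - 2 * d 0 \<phi> - d 2 \<phi> * s\<^sup>2\<bar> \<le> D * s ^ 4 / 12"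
      by (rule even_taylor[OF der bd])
    have R: "\<bar>(L x + L (2 * \<phi> - x)) / 2 - c - (b / 2 * s\<^sup>2 + \<gamma>)\<bar> \<le> D * s ^ 4 / 24"
    proof -
      have eq: "(L x + L (2 * \<phi> - x)) / 2 - c - (b / 2 * s\<^sup>2 + \<gamma>)
          = (d 0 (\<phi> + s) + d 0 (\<phi> - s) - 2 * d 0 \<phi> - d 2 \<phi> * s\<^sup>2) / 2"
        unfolding x xR by (simp add: L_def b_def \<gamma>_def field_simps)
      have "\<bar>(L x + L (2 * \<phi> - x)) / 2 - c - (b / 2 * s\<^sup>2 + \<gamma>)\<bar>
          = \<bar>d 0 (\<phi> + s) + d 0 (\<phi> - s) - 2 * d 0 \<phi> - d 2 \<phi> * s\<^sup>2\<bar> / 2"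
        unfolding eq by simp
      also have "\<dots> \<le> (D * s ^ 4 / 12) / 2" by (rule divide_right_mono[OF T]) simp
      also have "\<dots> = D * s ^ 4 / 24" by simp
      finally show ?thesis .
    qed
    have "(1 - \<epsilon>) * (b / 2 * s\<^sup>2 + \<gamma>)\<^sup>2 - (1 / \<epsilon> - 1) * (D * s ^ 4 / 24)\<^sup>2
        \<le> ((L x - c)\<^sup>2 + (L (2 * \<phi> - x) - c)\<^sup>2) / 2"
      by (rule pointwise_low[OF e R])
    moreover have "low x = (1 - \<epsilon>) * (b / 2 * s\<^sup>2 + \<gamma>)\<^sup>2 - (1 / \<epsilon> - 1) * (D * s ^ 4 / 24)\<^sup>2"
      by (simp add: low_def s_def[symmetric] \<kappa>_def power2_eq_square field_simps eval_nat_numeral)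
    ultimately show ?thesis by (simp add: g_def)
  qed
  have "(1 - \<epsilon>) * (b / 2)\<^sup>2 * (2 * r ^ 5 / 5) + (1 - \<epsilon>) * (b * \<gamma>) * (2 * r ^ 3 / 3)
      + (1 - \<epsilon>) * \<gamma>\<^sup>2 * (2 * r ^ 1 / 1) - \<kappa> * (2 * r ^ 9 / 9) \<le> integral S g"
    by (rule has_integral_le[OF lowi avg pw])
  hence "((1 - \<epsilon>) * (b / 2)\<^sup>2 * (2 * r ^ 5 / 5) + (1 - \<epsilon>) * (b * \<gamma>) * (2 * r ^ 3 / 3)
      + (1 - \<epsilon>) * \<gamma>\<^sup>2 * (2 * r ^ 1 / 1) - \<kappa> * (2 * r ^ 9 / 9)) / (2 * r) \<le> unif_var \<phi> r (d 0)"
    unfolding var using r by (simp add: divide_right_mono)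
  moreover have "((1 - \<epsilon>) * (b / 2)\<^sup>2 * (2 * r ^ 5 / 5) + (1 - \<epsilon>) * (b * \<gamma>) * (2 * r ^ 3 / 3)
      + (1 - \<epsilon>) * \<gamma>\<^sup>2 * (2 * r ^ 1 / 1) - \<kappa> * (2 * r ^ 9 / 9)) / (2 * r)
      = (1 - \<epsilon>) * (b\<^sup>2 * r ^ 4 / 45 + (\<gamma> + b * r\<^sup>2 / 6)\<^sup>2) - (1 / \<epsilon> - 1) * D\<^sup>2 * r ^ 8 / 5184"
    using r by (simp add: \<kappa>_def power2_eq_square field_simps eval_nat_numeral)
  moreover have "(1 - \<epsilon>) * (b\<^sup>2 * r ^ 4 / 45) \<le> (1 - \<epsilon>) * (b\<^sup>2 * r ^ 4 / 45 + (\<gamma> + b * r\<^sup>2 / 6)\<^sup>2)"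
    using e by (intro mult_left_mono) auto
  ultimately show ?thesis by (simp add: b_def)
qed

theorem corollary4:
  fixes \<rho> Ob :: "complex^'n::finite^'n"
    and K :: nat
    and H V :: "nat \<Rightarrow> complex^'n^'n"
    and \<phi> r :: real
  assumes "density_operator \<rho>"
    and "hermitian Ob"
    and "\<forall>k\<in>{1..K}. hermitian (H k)"
    and "\<forall>k\<in>{1..K}. unitary (V k)"
    and "r > 0"
    and "r * (4 * (\<Sum>i=1..K. omega_max (H i))) \<le> 3"
  shows "unif_var \<phi> r (loss \<rho> Ob K V H) \<ge>
           r ^ 4 / 45 * (Re (trace (\<rho> ** chan2 K V H \<phi> Ob)))\<^sup>2
           - 32 * (\<Sum>i=1..K. omega_max (H i)) ^ 6 * (op_norm Ob)\<^sup>2 / 135 * r ^ 6"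
proof -
  define \<Omega> where "\<Omega> = (\<Sum>i=1..K. omega_max (H i))"
  define N where "N = op_norm Ob"
  have hh: "\<forall>k\<in>{1..K}. hermitian (H k)" using assms(3) .
  have hu: "\<forall>k\<in>{1..K}. hermitian (H k) \<and> unitary (V k)" using assms(3,4) by blast
  define d where "d = Ld \<rho> Ob K V H"
  have der: "\<And>m x. DERIV (d m) x :> d (Suc m) x" unfolding d_def by (rule Ld_deriv[OF hh])
  have bd: "\<And>m x. \<bar>d m x\<bar> \<le> \<Omega> ^ m * N"
    unfolding d_def \<Omega>_def N_def by (rule Ld_bound[OF hu assms(1)])
  have lossd: "loss \<rho> Ob K V H = d 0" by (rule ext) (simp add: loss_Ld d_def)
  have bchan: "Re (trace (\<rho> ** chan2 K V H \<phi> Ob)) = d 2 \<phi>"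
    by (simp add: chan2_Fd[OF hh] d_def Ld_def)
  have \<Omega>0: "0 \<le> \<Omega>" unfolding \<Omega>_def using hh by (intro sum_nonneg omega_nonneg) auto
  have N0: "0 \<le> N" unfolding N_def by (rule op_norm_nonneg)
  have r0: "0 < r" using assms(5) .
  have r\<Omega>: "r * \<Omega> \<le> 3 / 4" using assms(6) unfolding \<Omega>_def by simp
  define X where "X = (d 2 \<phi>)\<^sup>2"
  have X0: "0 \<le> X" by (simp add: X_def)
  have XB: "X \<le> \<Omega> ^ 4 * N\<^sup>2"
  proof -
    have "\<bar>d 2 \<phi>\<bar>\<^sup>2 \<le> (\<Omega> ^ 2 * N)\<^sup>2" by (intro power_mono bd) simp
    thus ?thesis by (simp add: X_def power_mult_distrib power2_eq_square[of "\<Omega>^2"]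
        flip: power_add)
  qed
  have main: "r ^ 4 / 45 * X - 32 * \<Omega> ^ 6 * N\<^sup>2 / 135 * r ^ 6 \<le> unif_var \<phi> r (d 0)"
  proof (cases "\<Omega> = 0")
    case True
    hence "X = 0" using XB X0 by simp
    moreover have "(1 - 1) * (d 2 \<phi>)\<^sup>2 * r ^ 4 / 45 - (1 / 1 - 1) * (\<Omega> ^ 4 * N)\<^sup>2 * r ^ 8 / 5184
        \<le> unif_var \<phi> r (d 0)"
      by (rule var_lower[where d=d, OF r0 der bd[of 4]]) simp_all
    ultimately show ?thesis using True by simp
  next
    case False
    hence \<Omega>p: "0 < \<Omega>" using \<Omega>0 by simp
    define \<epsilon> where "\<epsilon> = \<Omega>\<^sup>2 * r\<^sup>2"
    have ep: "0 < \<epsilon>" using \<Omega>p r0 by (simp add: \<epsilon>_def)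
    have e1: "\<epsilon> \<le> 1"
    proof -
      have "\<epsilon> = (r * \<Omega>)\<^sup>2" by (simp add: \<epsilon>_def power_mult_distrib)
      also have "\<dots> \<le> (3 / 4)\<^sup>2" using r\<Omega> \<Omega>0 r0 by (intro power_mono) auto
      also have "(3 / 4 :: real)\<^sup>2 \<le> 1" by (simp add: power2_eq_square)
      finally show ?thesis .
    qed
    have VL: "(1 - \<epsilon>) * X * r ^ 4 / 45 - (1 / \<epsilon> - 1) * (\<Omega> ^ 4 * N)\<^sup>2 * r ^ 8 / 5184
        \<le> unif_var \<phi> r (d 0)"
      unfolding X_def by (rule var_lower[where d=d, OF r0 der bd[of 4] ep e1])
    have p1: "\<epsilon> * X * r ^ 4 / 45 \<le> \<Omega> ^ 6 * N\<^sup>2 * r ^ 6 / 45"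
    proof -
      have "\<epsilon> * r ^ 4 * X \<le> \<epsilon> * r ^ 4 * (\<Omega> ^ 4 * N\<^sup>2)"
        using XB ep by (intro mult_left_mono) auto
      also have "\<epsilon> * r ^ 4 * (\<Omega> ^ 4 * N\<^sup>2) = \<Omega> ^ 6 * N\<^sup>2 * r ^ 6"
        by (simp add: \<epsilon>_def power2_eq_square eval_nat_numeral)
      finally show ?thesis by (simp add: mult.commute mult.left_commute)
    qed
    have p2: "(1 / \<epsilon>) * (\<Omega> ^ 4 * N)\<^sup>2 * r ^ 8 / 5184 = \<Omega> ^ 6 * N\<^sup>2 * r ^ 6 / 5184"
      using \<Omega>p r0 by (simp add: \<epsilon>_def power2_eq_square eval_nat_numeral field_simps)
    have p3: "(1 / \<epsilon> - 1) * (\<Omega> ^ 4 * N)\<^sup>2 * r ^ 8 / 5184 \<le> (1 / \<epsilon>) * (\<Omega> ^ 4 * N)\<^sup>2 * r ^ 8 / 5184"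
      using r0 by (simp add: algebra_simps)
    have p4: "(1 - \<epsilon>) * X * r ^ 4 / 45 = X * r ^ 4 / 45 - \<epsilon> * X * r ^ 4 / 45"
      by (simp add: field_simps)
    have p5: "0 \<le> \<Omega> ^ 6 * N\<^sup>2 * r ^ 6" using \<Omega>0 r0 by simp
    have "r ^ 4 / 45 * X - 32 * \<Omega> ^ 6 * N\<^sup>2 / 135 * r ^ 6
        \<le> X * r ^ 4 / 45 - \<Omega> ^ 6 * N\<^sup>2 * r ^ 6 / 45 - \<Omega> ^ 6 * N\<^sup>2 * r ^ 6 / 5184"
      using p5 by (simp add: algebra_simps)
    also have "\<dots> \<le> unif_var \<phi> r (d 0)"
    proof -
      define T1 where "T1 = (1 - \<epsilon>) * X * r ^ 4 / 45"
      define T2 where "T2 = (1 / \<epsilon> - 1) * (\<Omega> ^ 4 * N)\<^sup>2 * r ^ 8 / 5184"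
      define T3 where "T3 = 1 / \<epsilon> * (\<Omega> ^ 4 * N)\<^sup>2 * r ^ 8 / 5184"
      define A where "A = X * r ^ 4 / 45"
      define EpsX where "EpsX = \<epsilon> * X * r ^ 4 / 45"
      define P6 where "P6 = \<Omega> ^ 6 * N\<^sup>2 * r ^ 6"
      have q1: "T1 - T2 \<le> unif_var \<phi> r (d 0)" using VL unfolding T1_def T2_def .
      have q2: "EpsX \<le> P6 / 45" using p1 unfolding EpsX_def P6_def .
      have q3: "T3 = P6 / 5184" using p2 unfolding T3_def P6_def .
      have q4: "T2 \<le> T3" using p3 unfolding T2_def T3_def .
      have q5: "T1 = A - EpsX" using p4 unfolding T1_def A_def EpsX_def .
      have "A - P6 / 45 - P6 / 5184 \<le> unif_var \<phi> r (d 0)" using q1 q2 q3 q4 q5 by linarith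
      thus ?thesis unfolding A_def P6_def .
    qed
    finally show ?thesis .
  qed
  show ?thesis
    unfolding lossd bchan using main by (simp only: X_def \<Omega>_def N_def)
qed

end
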